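(* Let $M\subset\mathbb{R}^d$ be a compact, geodesically convex set with $r_0:=\mathrm{reach}(M)>0$. For each $n$ let $\mathcal{X}_n=\{X_1,\dots,X_n\}\subset M$ be a finite set, and let $\{\varepsilon_n\}_n$ be a sequence of strictly positive real numbers with $\varepsilon_n\to 0$ and $\tau_n:=d_H(\mathcal{X}_n,M)/\varepsilon_n\to 0$. Let $n$ be large enough that $\varepsilon_n<2r_0$. Then for all $x,y\in M$, $$\Big(1-\frac{1}{24}\Big(\frac{\pi\varepsilon_n}{2r_0}\Big)^2\Big)\,d_M(x,y)\;\le\; d_{G_n}(x,y)\;\le\;(1+4\tau_n)\,d_M(x,y),$$ where $d_{G_n}(x,y)$ denotes the graph distance between $x$ and $y$ in the graph $G_n$ built on the vertex set $\mathcal{X}_n\cup\{x,y\}$.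
   Context: $\|\cdot\|$ is the Euclidean norm. For $A\subset\mathbb{R}^d$, $d(x,A)=\inf_{a\in A}\|x-a\|$; for nonempty compact $A,C$, the Hausdorff distance is $d_H(A,C)=\max\{\max_{a\in A}d(a,C),\max_{c\in C}d(c,A)\}$. $\mathrm{Unp}(M)$ is the set of points of $\mathbb{R}^d$ having a unique closest point in $M$; for $x\in M$, $\mathrm{reach}(M,x)=\sup\{r>0:\mathring{\mathcal{B}}(x,r)\subset\mathrm{Unp}(M)\}$ (open ball), and $\mathrm{reach}(M)=\inf_{x\in M}\mathrm{reach}(M,x)$. The length of a continuous curve $\gamma:[0,T]\to M$ is $l(\gamma)=\sup_P\sum_i\|\gamma(t_{i+1})-\gamma(t_i)\|$ over finite partitions of $[0,T]$; the geodesic distance is $d_M(x,y)=\inf_\gamma l(\gamma)$ over continuous curves in $M$ joining $x,y$; $M$ is geodesically convex if any two points are joined by a curve in $M$ of length $d_M(x,y)$. Given a finite vertex set $V$ and $\varepsilon_n>0$, the graph $G_n$ on $V$ has an edge between $u,v$ iff $\|u-v\|\le\varepsilon_n$, and $d_{G_n}(u,v)=\min_P\sum_{i=1}^{p-1}\|v_{i+1}-v_i\|$ over all paths $P=(v_1,\dots,v_p)$ along edges of $G_n$ with $v_1=u$, $v_p=v$. *)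

theory Defs
  imports "HOL-Analysis.Analysis"
begin

definition hausdorff_dist :: "'a::metric_space set \<Rightarrow> 'a set \<Rightarrow> real" where
  "hausdorff_dist A C = max (SUP a\<in>A. infdist a C) (SUP c\<in>C. infdist c A)"

definition Unp :: "'a::metric_space set \<Rightarrow> 'a set" where
  "Unp M = {x. \<exists>!a. a \<in> M \<and> (\<forall>b\<in>M. dist x a \<le> dist x b)}"

definition reach_at :: "'a::metric_space set \<Rightarrow> 'a \<Rightarrow> ereal" where
  "reach_at M x = (SUP r\<in>{r::real. r > 0 \<and> ball x r \<subseteq> Unp M}. ereal r)"

definition reach :: "'a::metric_space set \<Rightarrow> ereal" where
  "reach M = (INF x\<in>M. reach_at M x)"

definition curve_length :: "(real \<Rightarrow> 'a::real_normed_vector) \<Rightarrow> real \<Rightarrow> ereal" where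
  "curve_length \<gamma> T =
     (SUP ts\<in>{ts. sorted ts \<and> set ts \<subseteq> {0..T}}.
        ereal (\<Sum>i<length ts - 1. norm (\<gamma> (ts ! Suc i) - \<gamma> (ts ! i))))"

definition curve_in :: "'a::real_normed_vector set \<Rightarrow> 'a \<Rightarrow> 'a \<Rightarrow> (real \<Rightarrow> 'a) \<Rightarrow> real \<Rightarrow> bool" where
  "curve_in M x y \<gamma> T \<longleftrightarrow> 0 \<le> T \<and> continuous_on {0..T} \<gamma> \<and> \<gamma> ` {0..T} \<subseteq> M
      \<and> \<gamma> 0 = x \<and> \<gamma> T = y"

definition geodesic_dist :: "'a::real_normed_vector set \<Rightarrow> 'a \<Rightarrow> 'a \<Rightarrow> ereal" where
  "geodesic_dist M x y = (INF (\<gamma>, T)\<in>{(\<gamma>, T). curve_in M x y \<gamma> T}. curve_length \<gamma> T)"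

definition geodesically_convex :: "'a::real_normed_vector set \<Rightarrow> bool" where
  "geodesically_convex M \<longleftrightarrow>
     (\<forall>x\<in>M. \<forall>y\<in>M. \<exists>\<gamma> T. curve_in M x y \<gamma> T \<and> curve_length \<gamma> T = geodesic_dist M x y)"

text \<open>Weighted shortest-path distance in the eps-neighbourhood graph on V
  (infinite if u, v are not connected).\<close>
definition graph_path :: "'a::real_normed_vector set \<Rightarrow> real \<Rightarrow> 'a \<Rightarrow> 'a \<Rightarrow> 'a list \<Rightarrow> bool" where
  "graph_path V eps u v P \<longleftrightarrow> P \<noteq> [] \<and> hd P = u \<and> last P = v \<and> set P \<subseteq> V
      \<and> (\<forall>i < length P - 1. norm (P ! Suc i - P ! i) \<le> eps)"

definition graph_dist :: "'a::real_normed_vector set \<Rightarrow> real \<Rightarrow> 'a \<Rightarrow> 'a \<Rightarrow> ereal" where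
  "graph_dist V eps u v =
     (INF P\<in>{P. graph_path V eps u v P}. ereal (\<Sum>i<length P - 1. norm (P ! Suc i - P ! i)))"

end

theory Submission
  imports Defs
begin


lemma cos_quad_lb:
  fixes x :: real assumes "0 \<le> x" shows "1 - x^2/2 \<le> cos x"
proof -
  have "(\<lambda>t. cos t - 1 + t^2/2) 0 \<le> (\<lambda>t. cos t - 1 + t^2/2) x"
  proof (rule DERIV_nonneg_imp_nondecreasing[OF assms])
    fix t :: real assume "0 \<le> t" "t \<le> x"
    show "\<exists>y. ((\<lambda>t. cos t - 1 + t^2/2) has_real_derivative y) (at t) \<and> 0 \<le> y"
      by (intro exI[of _ "- sin t + t"] conjI) (auto intro!: derivative_eq_intros simp: sin_x_le_x \<open>0 \<le> t\<close>)
  qed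
  then show ?thesis by simp
qed

lemma sin_cubic_lb:
  fixes x :: real assumes "0 \<le> x" shows "x - x^3/6 \<le> sin x"
proof -
  have "(\<lambda>t. sin t - t + t^3/6) 0 \<le> (\<lambda>t. sin t - t + t^3/6) x"
  proof (rule DERIV_nonneg_imp_nondecreasing[OF assms])
    fix t :: real assume "0 \<le> t" "t \<le> x"
    show "\<exists>y. ((\<lambda>t. sin t - t + t^3/6) has_real_derivative y) (at t) \<and> 0 \<le> y"
      using cos_quad_lb[OF \<open>0 \<le> t\<close>]
      by (intro exI[of _ "cos t - 1 + t^2/2"] conjI) (auto intro!: derivative_eq_intros)
  qed
  then show ?thesis by simp
qed

lemma sin_minus_xcos:
  fixes x :: real assumes "0 \<le> x" "x \<le> pi" shows "x * cos x \<le> sin x"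
proof -
  have "(\<lambda>t. sin t - t * cos t) 0 \<le> (\<lambda>t. sin t - t * cos t) x"
  proof (rule DERIV_nonneg_imp_nondecreasing[OF assms(1)])
    fix t :: real assume "0 \<le> t" "t \<le> x"
    then have "0 \<le> t * sin t" using assms by (simp add: sin_ge_zero)
    then show "\<exists>y. ((\<lambda>t. sin t - t * cos t) has_real_derivative y) (at t) \<and> 0 \<le> y"
      by (intro exI[of _ "t * sin t"] conjI) (auto intro!: derivative_eq_intros)
  qed
  then show ?thesis by simp
qed

lemma jordan:
  fixes x :: real assumes "0 \<le> x" "x \<le> pi/2" shows "2 * x / pi \<le> sin x"
proof (cases "x = 0")
  case True then show ?thesis by simp
next
  case False
  then have xp: "0 < x" using assms by simp
  have "(\<lambda>t. sin t / t) (pi/2) \<le> (\<lambda>t. sin t / t) x"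
  proof (rule DERIV_nonpos_imp_nonincreasing[OF assms(2)])
    fix t :: real assume t: "x \<le> t" "t \<le> pi/2"
    then have tp: "0 < t" using xp by simp
    have "t * cos t \<le> sin t" using t xp by (intro sin_minus_xcos) auto
    then have "(cos t * t - sin t) / t^2 \<le> 0"
      by (intro divide_nonpos_nonneg) (auto simp: algebra_simps)
    then show "\<exists>y. ((\<lambda>t. sin t / t) has_real_derivative y) (at t) \<and> y \<le> 0"
      using tp
      by (intro exI[of _ "(cos t * t - sin t) / t^2"] conjI)
         (auto intro!: derivative_eq_intros simp: power2_eq_square)
  qed
  then have "2 / pi \<le> sin x / x" by simp
  then show ?thesis using xp by (simp add: field_simps)
qed

lemma lower_factor:
  fixes r t e :: real
  assumes "0 < r" "0 \<le> t" "t \<le> e" "e < 2*r"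
  shows "(1 - (1/24) * (pi * e / 2)^2 * (1/r)^2) * (2*r*arcsin (t/(2*r))) \<le> t"
proof -
  define x where "x = t/(2*r)"
  define \<phi> where "\<phi> = arcsin x"
  have x01: "0 \<le> x" "x \<le> 1" using assms by (auto simp: x_def field_simps)
  have sphi: "sin \<phi> = x" using x01 by (simp add: \<phi>_def)
  have phi: "0 \<le> \<phi>" "\<phi> \<le> pi/2" using x01 arcsin_bounded[of x] arcsin_le_arcsin[of 0 x]
    by (auto simp: \<phi>_def)
  have j: "2*\<phi>/pi \<le> x" using jordan[OF phi] sphi by simp
  have j2: "(2*\<phi>/pi)^2 \<le> x^2" using j phi by (intro power_mono) auto
  have "(1/24) * (pi * e / 2)^2 * (1/r)^2 = (pi^2/24) * (e/(2*r))^2"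
    by (simp add: field_simps power2_eq_square)
  also have "\<dots> \<ge> (pi^2/24) * x^2"
  proof -
    have "x \<le> e/(2*r)" using assms by (simp add: x_def divide_right_mono)
    then have "x^2 \<le> (e/(2*r))^2" using x01 by (intro power_mono) auto
    then show ?thesis by (intro mult_left_mono) auto
  qed
  moreover have "(pi^2/24) * x^2 \<ge> (pi^2/24) * (2*\<phi>/pi)^2" using j2 by (intro mult_left_mono) auto
  moreover have "(pi^2/24) * (2*\<phi>/pi)^2 = \<phi>^2/6" by (simp add: field_simps power2_eq_square)
  ultimately have X: "(1/24) * (pi * e / 2)^2 * (1/r)^2 \<ge> \<phi>^2/6" by linarith
  have "(1 - (1/24) * (pi * e / 2)^2 * (1/r)^2) * \<phi> \<le> (1 - \<phi>^2/6) * \<phi>"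
    using X phi by (intro mult_right_mono) auto
  also have "\<dots> = \<phi> - \<phi>^3/6" by (simp add: algebra_simps power2_eq_square power3_eq_cube)
  also have "\<dots> \<le> x" using sin_cubic_lb[OF phi(1)] sphi by simp
  finally have "(1 - (1/24) * (pi * e / 2)^2 * (1/r)^2) * \<phi> \<le> x" .
  then have "2*r*((1 - (1/24) * (pi * e / 2)^2 * (1/r)^2) * \<phi>) \<le> 2*r*x"
    using assms by (intro mult_left_mono) auto
  then show ?thesis using assms by (simp add: x_def \<phi>_def algebra_simps)
qed

lemma angle_sum:
  fixes a b th :: real
  assumes "0 \<le> a" "a \<le> pi/2" "0 \<le> b" "b \<le> pi/2" "0 \<le> th" "th < pi/2"
    and "(sin a)^2 + (sin b)^2 \<le> 1 - cos th"
  shows "a + b \<le> th"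
proof -
  have id: "cos (a+b) * cos (a-b) = 1 - (sin a)^2 - (sin b)^2"
  proof -
    have e: "cos a * cos a = 1 - sin a * sin a" "cos b * cos b = 1 - sin b * sin b"
      by (simp_all add: cos_squared_eq power2_eq_square[symmetric])
    have "cos (a+b) * cos (a-b) = (cos a * cos a) * (cos b * cos b) - (sin a * sin a) * (sin b * sin b)"
      by (simp add: cos_add cos_diff algebra_simps)
    also have "\<dots> = 1 - (sin a)^2 - (sin b)^2" unfolding e by (simp add: algebra_simps power2_eq_square)
    finally show ?thesis .
  qed
  have cth: "cos th > 0" using assms by (intro cos_gt_zero_pi) auto
  have cd: "0 \<le> cos (a-b)" "cos (a-b) \<le> 1" using assms by (auto intro!: cos_ge_zero)
  have prod: "cos (a+b) * cos (a-b) \<ge> cos th" using id assms(7) by linarith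
  have cpos: "cos (a+b) > 0"
  proof (rule ccontr)
    assume "\<not> cos (a+b) > 0"
    then have "cos (a+b) * cos (a-b) \<le> 0" using cd by (simp add: mult_nonpos_nonneg)
    then show False using prod cth by linarith
  qed
  have "cos (a+b) * cos (a-b) \<le> cos (a+b)" using cpos cd by (simp add: mult_left_le)
  then have "cos th \<le> cos (a+b)" using prod by linarith
  then show ?thesis using assms by (subst (asm) cos_mono_le_eq) auto
qed


fun csum :: "(real \<Rightarrow> real) \<Rightarrow> 'a::real_normed_vector list \<Rightarrow> real" where
  "csum f (x # y # xs) = f (norm (y - x)) + csum f (y # xs)"
| "csum f _ = 0"

fun gaps :: "real \<Rightarrow> 'a::real_normed_vector list \<Rightarrow> bool" where
  "gaps e (x # y # xs) = (norm (y - x) \<le> e \<and> gaps e (y # xs))"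
| "gaps e _ = True"

abbreviation psum :: "'a::real_normed_vector list \<Rightarrow> real" where
  "psum \<equiv> csum (\<lambda>x. x)"

lemma csum_idx: "csum f xs = (\<Sum>i<length xs - 1. f (norm (xs ! Suc i - xs ! i)))"
proof (induction f xs rule: csum.induct)
  case (1 f x y xs)
  have "(\<Sum>i<length (x # y # xs) - 1. f (norm ((x # y # xs) ! Suc i - (x # y # xs) ! i)))
      = (\<Sum>i<Suc (length (y # xs) - 1). f (norm ((x # y # xs) ! Suc i - (x # y # xs) ! i)))"
    by simp
  also have "\<dots> = f (norm (y - x)) + (\<Sum>i<length (y # xs) - 1. f (norm ((y # xs) ! Suc i - (y # xs) ! i)))"
    by (subst sum.lessThan_Suc_shift) simp
  finally show ?case using 1 by simp
qed auto

lemma gaps_idx: "gaps e xs \<longleftrightarrow> (\<forall>i<length xs - 1. norm (xs ! Suc i - xs ! i) \<le> e)"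
proof (induction e xs rule: gaps.induct)
  case (1 e x y xs)
  show ?case
  proof
    assume "gaps e (x # y # xs)"
    then show "\<forall>i<length (x # y # xs) - 1. norm ((x # y # xs) ! Suc i - (x # y # xs) ! i) \<le> e"
      using 1 by (auto simp: less_Suc_eq_0_disj)
  next
    assume h: "\<forall>i<length (x # y # xs) - 1. norm ((x # y # xs) ! Suc i - (x # y # xs) ! i) \<le> e"
    have "norm (y - x) \<le> e" using h[rule_format, of 0] by simp
    moreover have "gaps e (y # xs)" using 1 h by (auto)
    ultimately show "gaps e (x # y # xs)" by simp
  qed
qed auto

lemma csum_snoc: "xs \<noteq> [] \<Longrightarrow> csum f (xs @ [y]) = csum f xs + f (norm (y - last xs))"
  by (induction f xs rule: csum.induct) auto

lemma csum_Cons: "xs \<noteq> [] \<Longrightarrow> csum f (x # xs) = f (norm (hd xs - x)) + csum f xs"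
  by (cases xs) auto

lemma gaps_Cons: "xs \<noteq> [] \<Longrightarrow> gaps e (x # xs) \<longleftrightarrow> norm (hd xs - x) \<le> e \<and> gaps e xs"
  by (cases xs) auto

lemma csum_join: "xs \<noteq> [] \<Longrightarrow> ys \<noteq> [] \<Longrightarrow> last xs = hd ys \<Longrightarrow>
  csum f (xs @ tl ys) = csum f xs + csum f ys"
proof (induction xs)
  case (Cons x xs)
  show ?case
  proof (cases "xs = []")
    case True
    then show ?thesis using Cons by (cases ys) simp_all
  next
    case False
    then show ?thesis using Cons by (simp add: csum_Cons)
  qed
qed simp

lemma gaps_join: "xs \<noteq> [] \<Longrightarrow> ys \<noteq> [] \<Longrightarrow> last xs = hd ys \<Longrightarrow>
  gaps e (xs @ tl ys) \<longleftrightarrow> gaps e xs \<and> gaps e ys"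
proof (induction xs)
  case (Cons x xs)
  show ?case
  proof (cases "xs = []")
    case True
    then show ?thesis using Cons by (cases ys) simp_all
  next
    case False
    then show ?thesis using Cons by (simp add: gaps_Cons)
  qed
qed simp

lemma csum_append: "xs \<noteq> [] \<Longrightarrow> ys \<noteq> [] \<Longrightarrow>
  csum f (xs @ ys) = csum f xs + f (norm (hd ys - last xs)) + csum f ys"
proof -
  assume a: "xs \<noteq> []" "ys \<noteq> []"
  have "xs @ ys = (xs @ [hd ys]) @ tl ys" using a by simp
  then have "csum f (xs @ ys) = csum f (xs @ [hd ys]) + csum f ys"
    using csum_join[of "xs @ [hd ys]" ys f] a by simp
  then show ?thesis using csum_snoc[OF a(1)] by simp
qed

lemma csum_nonneg: "(\<And>x. 0 \<le> x \<Longrightarrow> 0 \<le> f x) \<Longrightarrow> 0 \<le> csum f xs"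
  by (induction f xs rule: csum.induct) (auto intro: add_nonneg_nonneg)

lemma csum_mono: "gaps C xs \<Longrightarrow> (\<And>x. 0 \<le> x \<Longrightarrow> x \<le> C \<Longrightarrow> f x \<le> g x) \<Longrightarrow> csum f xs \<le> csum g xs"
  by (induction f xs rule: csum.induct) (auto intro: add_mono)

lemma csum_cmult: "csum (\<lambda>x. c * f x) xs = c * csum f xs"
  by (induction f xs rule: csum.induct) (auto simp: algebra_simps)

lemma gaps_mono: "gaps C xs \<Longrightarrow> C \<le> D \<Longrightarrow> gaps D xs"
  by (induction C xs rule: gaps.induct) auto

lemma psum_ge_dist: "xs \<noteq> [] \<Longrightarrow> norm (last xs - hd xs) \<le> psum xs"
proof (induction "\<lambda>x::real. x" xs rule: csum.induct)
  case (1 x y xs)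
  have "norm (last (y # xs) - x) \<le> norm (last (y#xs) - y) + norm (y - x)"
    using norm_triangle_ineq[of "last (y # xs) - y" "y - x"] by simp
  then show ?case using 1 by simp
qed auto

lemma psum_split_le: "psum (xs @ ys) \<le> psum (xs @ [m]) + psum (m # ys)"
proof (cases "xs = [] \<or> ys = []")
  case True
  then show ?thesis
  proof
    assume "xs = []"
    then show ?thesis by (cases ys) (auto intro: csum_nonneg)
  next
    assume "ys = []"
    then show ?thesis by (cases "xs = []") (auto simp: csum_snoc)
  qed
next
  case False
  then have "psum (xs @ ys) = psum xs + norm (hd ys - last xs) + psum ys" by (simp add: csum_append)
  moreover have "psum (xs @ [m]) = psum xs + norm (m - last xs)" using False by (simp add: csum_snoc)
  moreover have "psum (m # ys) = norm (hd ys - m) + psum ys" using False by (cases ys) auto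
  moreover have "norm (hd ys - last xs) \<le> norm (hd ys - m) + norm (m - last xs)"
    using norm_triangle_ineq[of "hd ys - m" "m - last xs"] by simp
  ultimately show ?thesis by linarith
qed

lemma psum_map_lip:
  fixes f :: "real \<Rightarrow> 'a::real_normed_vector"
  assumes "\<And>x y. x \<in> set ts \<Longrightarrow> y \<in> set ts \<Longrightarrow> norm (f y - f x) \<le> L * \<bar>y - x\<bar>"
  shows "psum (map f ts) \<le> L * psum ts"
  using assms
proof (induction "\<lambda>x::real. x" ts rule: csum.induct)
  case (1 x y xs)
  have "norm (f y - f x) \<le> L * \<bar>y - x\<bar>" using 1(2) by simp
  moreover have "psum (map f (y # xs)) \<le> L * psum (y # xs)" using 1 by simp
  ultimately show ?case by (simp add: algebra_simps)
qed auto

lemma psum_sorted: "sorted ts \<Longrightarrow> ts \<noteq> [] \<Longrightarrow> psum ts = last ts - hd (ts :: real list)"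
  by (induction "\<lambda>x::real. x" ts rule: csum.induct) auto

lemma psum_map_idx: "psum (map g ts) = (\<Sum>i<length ts - 1. norm (g (ts ! Suc i) - g (ts ! i)))"
  by (simp add: csum_idx)

lemma cl_ge: "sorted ts \<Longrightarrow> set ts \<subseteq> {0..T} \<Longrightarrow> ereal (psum (map g ts)) \<le> curve_length g T"
  unfolding curve_length_def psum_map_idx by (rule SUP_upper) auto

lemma cl_le: "(\<And>ts. sorted ts \<Longrightarrow> set ts \<subseteq> {0..T} \<Longrightarrow> ereal (psum (map g ts)) \<le> B) \<Longrightarrow>
  curve_length g T \<le> B"
  unfolding curve_length_def psum_map_idx by (rule SUP_least) auto

lemma cl_nonneg: "0 \<le> curve_length g T"
  using cl_ge[of "[]" T g] by (simp add: zero_ereal_def)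

lemma cl_zero: "curve_length g 0 = 0"
proof (rule antisym)
  show "curve_length g 0 \<le> 0"
  proof (rule cl_le)
    fix ts :: "real list" assume "sorted ts" "set ts \<subseteq> {0..0}"
    then have "\<forall>t\<in>set ts. t = 0" by auto
    then have e: "map g ts = map (\<lambda>_. g 0) ts" by (intro map_cong) auto
    have z: "psum (map (\<lambda>_. g 0) ts) = 0"
      by (induction "\<lambda>x::real. x" ts rule: csum.induct) auto
    show "ereal (psum (map g ts)) \<le> 0" unfolding e z by simp
  qed
qed (rule cl_nonneg)

lemma sorted_dropWhile_gt:
  fixes ts :: "real list"
  assumes "sorted ts" shows "\<forall>t\<in>set (dropWhile (\<lambda>t. t \<le> c) ts). c < t"
proof (cases "dropWhile (\<lambda>t. t \<le> c) ts")
  case (Cons b B)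
  have "sorted (b # B)" using sorted_dropWhile[OF assms] Cons by metis
  then have "\<forall>t\<in>set B. b \<le> t" by simp
  moreover have "\<not> b \<le> c" using hd_dropWhile[of "\<lambda>t. t \<le> c" ts] Cons by simp
  ultimately show ?thesis unfolding Cons by force
next
  case Nil
  show ?thesis unfolding Nil by simp
qed

lemma cl_concat:
  fixes g1 g2 :: "real \<Rightarrow> 'a::real_normed_vector"
  assumes "0 \<le> T1" "0 \<le> T2" "g1 T1 = g2 0"
  shows "curve_length (\<lambda>t. if t \<le> T1 then g1 t else g2 (t - T1)) (T1 + T2)
           \<le> curve_length g1 T1 + curve_length g2 T2"
proof (rule cl_le)
  fix ts :: "real list" assume ts: "sorted ts" "set ts \<subseteq> {0..T1+T2}"
  define g where "g = (\<lambda>t. if t \<le> T1 then g1 t else g2 (t - T1))"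
  define A where "A = takeWhile (\<lambda>t. t \<le> T1) ts"
  define B where "B = dropWhile (\<lambda>t. t \<le> T1) ts"
  have tsAB: "ts = A @ B" by (simp add: A_def B_def)
  have Ale: "\<forall>t\<in>set A. t \<le> T1" unfolding A_def by (auto dest: set_takeWhileD)
  have Bgt: "\<forall>t\<in>set B. T1 < t" unfolding B_def using sorted_dropWhile_gt[OF ts(1)] by blast
  have sA: "sorted A" and sB: "sorted B" using ts(1) unfolding A_def B_def
    by (simp_all add: sorted_takeWhile sorted_dropWhile)
  have "psum (map g ts) = psum (map g A @ map g B)" using tsAB by simp
  also have "\<dots> \<le> psum (map g A @ [g T1]) + psum (g T1 # map g B)" by (rule psum_split_le)
  also have "map g A @ [g T1] = map g1 (A @ [T1])" using Ale by (simp add: g_def)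
  also have "g T1 # map g B = map g2 (map (\<lambda>t. t - T1) (T1 # B))"
  proof -
    have "map g B = map (\<lambda>t. g2 (t - T1)) B" using Bgt by (intro map_cong) (auto simp: g_def)
    then show ?thesis using assms(3) by (simp add: g_def)
  qed
  finally have le: "psum (map g ts) \<le> psum (map g1 (A @ [T1])) + psum (map g2 (map (\<lambda>t. t - T1) (T1 # B)))" .
  have "ereal (psum (map g1 (A @ [T1]))) \<le> curve_length g1 T1"
  proof (rule cl_ge)
    show "sorted (A @ [T1])" using sA Ale by (simp add: sorted_append)
    show "set (A @ [T1]) \<subseteq> {0..T1}" using Ale ts(2) tsAB assms(1) by auto
  qed
  moreover have "ereal (psum (map g2 (map (\<lambda>t. t - T1) (T1 # B)))) \<le> curve_length g2 T2"
  proof (rule cl_ge)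
    have "sorted (T1 # B)" using sB Bgt by (auto simp: less_imp_le)
    then show "sorted (map (\<lambda>t. t - T1) (T1 # B))" by (simp add: sorted_map)
    have "set B \<subseteq> {0..T1+T2}" using ts(2) tsAB by auto
    then show "set (map (\<lambda>t. t - T1) (T1 # B)) \<subseteq> {0..T2}" using Bgt assms by (force simp: subset_iff less_imp_le)
  qed
  ultimately have "ereal (psum (map g ts)) \<le> curve_length g1 T1 + curve_length g2 T2"
  proof -
    have "ereal (psum (map g ts)) \<le> ereal (psum (map g1 (A @ [T1]))) + ereal (psum (map g2 (map (\<lambda>t. t - T1) (T1 # B))))"
      using le by simp
    also have "\<dots> \<le> curve_length g1 T1 + curve_length g2 T2"
      by (rule add_mono) fact+
    finally show ?thesis .
  qed
  then show "ereal (psum (map (\<lambda>t. if t \<le> T1 then g1 t else g2 (t - T1)) ts)) \<le> curve_length g1 T1 + curve_length g2 T2"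
    by (simp add: g_def)
qed


lemma gd_le: "curve_in M x y g T \<Longrightarrow> geodesic_dist M x y \<le> curve_length g T"
  unfolding geodesic_dist_def by (rule INF_lower2[of "(g,T)"]) auto

lemma gd_nonneg: "0 \<le> geodesic_dist M x y"
  unfolding geodesic_dist_def by (rule INF_greatest) (auto simp: cl_nonneg)

lemma gd_refl: "x \<in> M \<Longrightarrow> geodesic_dist M x x = 0"
proof (rule antisym)
  assume "x \<in> M"
  then have "curve_in M x x (\<lambda>_. x) 0" by (auto simp: curve_in_def)
  then have "geodesic_dist M x x \<le> curve_length (\<lambda>_. x) 0" by (rule gd_le)
  then show "geodesic_dist M x x \<le> 0" by (simp add: cl_zero)
qed (rule gd_nonneg)

lemma curve_in_concat:
  assumes c1: "curve_in M x y g1 T1" and c2: "curve_in M y z g2 T2"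
  shows "curve_in M x z (\<lambda>t. if t \<le> T1 then g1 t else g2 (t - T1)) (T1 + T2)"
proof -
  have T: "0 \<le> T1" "0 \<le> T2" using c1 c2 by (auto simp: curve_in_def)
  have cont: "continuous_on {0..T1+T2} (\<lambda>t. if t \<le> T1 then g1 t else g2 (t - T1))"
  proof (rule continuous_on_cases_le[where h="\<lambda>t. t"])
    show "continuous_on {t \<in> {0..T1 + T2}. t \<le> T1} g1"
      using c1 by (auto simp: curve_in_def elim: continuous_on_subset)
    have "continuous_on {t \<in> {0..T1 + T2}. T1 \<le> t} ((\<lambda>s. g2 s) \<circ> (\<lambda>t. t - T1))"
    proof (rule continuous_on_compose)
      show "continuous_on {t \<in> {0..T1 + T2}. T1 \<le> t} (\<lambda>t. t - T1)" by (intro continuous_intros)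
      have "(\<lambda>t. t - T1) ` {t \<in> {0..T1 + T2}. T1 \<le> t} \<subseteq> {0..T2}" by auto
      then show "continuous_on ((\<lambda>t. t - T1) ` {t \<in> {0..T1 + T2}. T1 \<le> t}) g2"
        using c2 by (auto simp: curve_in_def elim: continuous_on_subset)
    qed
    then show "continuous_on {t \<in> {0..T1 + T2}. T1 \<le> t} (\<lambda>t. g2 (t - T1))" by (simp add: o_def)
    show "continuous_on {0..T1 + T2} (\<lambda>t. t)" by (intro continuous_intros)
    show "\<And>t. t \<in> {0..T1 + T2} \<Longrightarrow> t = T1 \<Longrightarrow> g1 t = g2 (t - T1)"
      using c1 c2 by (auto simp: curve_in_def)
  qed
  have img: "(\<lambda>t. if t \<le> T1 then g1 t else g2 (t - T1)) ` {0..T1+T2} \<subseteq> M"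
  proof
    fix w assume "w \<in> (\<lambda>t. if t \<le> T1 then g1 t else g2 (t - T1)) ` {0..T1+T2}"
    then obtain t where t: "t \<in> {0..T1+T2}" "w = (if t \<le> T1 then g1 t else g2 (t - T1))" by auto
    show "w \<in> M"
    proof (cases "t \<le> T1")
      case True
      then show ?thesis using t c1 by (auto simp: curve_in_def)
    next
      case False
      then have "t - T1 \<in> {0..T2}" using t by auto
      then show ?thesis using t False c2 by (auto simp: curve_in_def)
    qed
  qed
  have ends: "(if T1 + T2 \<le> T1 then g1 (T1 + T2) else g2 (T1 + T2 - T1)) = z"
    using c1 c2 T by (auto simp: curve_in_def)
  show ?thesis using cont img ends T c1 by (auto simp: curve_in_def)
qed

lemma gd_triangle:
  assumes "geodesically_convex M" "x \<in> M" "y \<in> M" "z \<in> M"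
  shows "geodesic_dist M x z \<le> geodesic_dist M x y + geodesic_dist M y z"
proof -
  obtain g1 T1 where c1: "curve_in M x y g1 T1" "curve_length g1 T1 = geodesic_dist M x y"
    using assms unfolding geodesically_convex_def by blast
  obtain g2 T2 where c2: "curve_in M y z g2 T2" "curve_length g2 T2 = geodesic_dist M y z"
    using assms unfolding geodesically_convex_def by blast
  have "geodesic_dist M x z \<le> curve_length (\<lambda>t. if t \<le> T1 then g1 t else g2 (t - T1)) (T1 + T2)"
    by (rule gd_le, rule curve_in_concat[OF c1(1) c2(1)])
  also have "\<dots> \<le> curve_length g1 T1 + curve_length g2 T2"
    using c1 c2 by (intro cl_concat) (auto simp: curve_in_def)
  finally show ?thesis using c1 c2 by simp
qed

lemma gd_chain:
  assumes "geodesically_convex M"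
    and "\<And>x y. x \<in> M \<Longrightarrow> y \<in> M \<Longrightarrow> norm (y - x) \<le> C \<Longrightarrow> geodesic_dist M x y \<le> ereal (f (norm (y - x)))"
  shows "ws \<noteq> [] \<Longrightarrow> set ws \<subseteq> M \<Longrightarrow> gaps C ws \<Longrightarrow> geodesic_dist M (hd ws) (last ws) \<le> ereal (csum f ws)"
proof (induction ws)
  case (Cons x ws)
  show ?case
  proof (cases "ws = []")
    case True
    then show ?thesis using Cons by (simp add: gd_refl)
  next
    case False
    have xM: "x \<in> M" and wsM: "set ws \<subseteq> M" using Cons by auto
    have hM: "hd ws \<in> M" "last ws \<in> M" using False wsM by auto
    have g: "norm (hd ws - x) \<le> C" "gaps C ws" using Cons(4) False by (auto simp: gaps_Cons)
    have "geodesic_dist M x (last ws) \<le> geodesic_dist M x (hd ws) + geodesic_dist M (hd ws) (last ws)"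
      using gd_triangle[OF assms(1) xM hM(1) hM(2)] .
    also have "\<dots> \<le> ereal (f (norm (hd ws - x))) + ereal (csum f ws)"
      using assms(2)[OF xM hM(1) g(1)] Cons.IH[OF False wsM g(2)] by (rule add_mono)
    finally show ?thesis using False by (simp add: csum_Cons)
  qed
qed simp


locale posreach =
  fixes M :: "'a::euclidean_space set" and r :: real
  assumes cM: "compact M" and neM: "M \<noteq> {}" and rpos: "0 < r"
    and unp: "\<And>z p q. infdist z M < r \<Longrightarrow> p \<in> M \<Longrightarrow> q \<in> M \<Longrightarrow> dist z p = infdist z M
               \<Longrightarrow> dist z q = infdist z M \<Longrightarrow> p = q"
begin

definition proj :: "'a \<Rightarrow> 'a" where
  "proj z = (SOME p. p \<in> M \<and> dist z p = infdist z M)"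

lemma closedM: "closed M" using cM by (rule compact_imp_closed)

lemma proj_ex: "\<exists>p. p \<in> M \<and> dist z p = infdist z M"
  using infdist_attains_inf[OF closedM neM, of z] by metis

lemma proj: "proj z \<in> M" "dist z (proj z) = infdist z M"
  using someI_ex[OF proj_ex[of z]] unfolding proj_def by auto

lemma proj_eq: "infdist z M < r \<Longrightarrow> p \<in> M \<Longrightarrow> dist z p = infdist z M \<Longrightarrow> proj z = p"
  using unp[of z "proj z" p] proj[of z] by auto

lemma proj_id: "p \<in> M \<Longrightarrow> proj p = p"
  using proj_eq[of p p] rpos by (simp add: in_closed_iff_infdist_zero[OF closedM neM])

lemma infdist_M_zero: "p \<in> M \<Longrightarrow> infdist p M = 0"
  by (simp add: in_closed_iff_infdist_zero[OF closedM neM])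

lemma proj_cont: "continuous_on {z. infdist z M < r} proj"
proof -
  let ?S = "{z. infdist z M < r}"
  have fim: "proj \<in> ?S \<rightarrow> M" using proj by auto
  have eq: "(\<lambda>x. Pair x (proj x)) ` ?S = {w \<in> ?S \<times> M. dist (fst w) (snd w) - infdist (fst w) M = 0}"
  proof (intro set_eqI iffI)
    fix w assume "w \<in> (\<lambda>x. Pair x (proj x)) ` ?S"
    then show "w \<in> {w \<in> ?S \<times> M. dist (fst w) (snd w) - infdist (fst w) M = 0}" using proj by auto
  next
    fix w assume w: "w \<in> {w \<in> ?S \<times> M. dist (fst w) (snd w) - infdist (fst w) M = 0}"
    then have "proj (fst w) = snd w" by (intro proj_eq) auto
    then show "w \<in> (\<lambda>x. Pair x (proj x)) ` ?S" using w by (auto intro!: image_eqI[of _ _ "fst w"])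
  qed
  have "closedin (top_of_set (?S \<times> M)) {w \<in> ?S \<times> M. dist (fst w) (snd w) - infdist (fst w) M = 0}"
    by (intro continuous_closedin_preimage_constant continuous_intros)
  then show ?thesis unfolding continuous_closed_graph_eq[OF cM fim] eq .
qed

lemma step_est:
  assumes d: "0 < infdist z M" and h: "0 \<le> h"
  defines "z' \<equiv> z + (h / infdist z M) *\<^sub>R (z - proj z)"
  shows "infdist z' M \<ge> infdist z M + h - h * (dist (proj z) (proj z'))^2 / (infdist z M)^2"
proof -
  define d where "d = infdist z M"
  define a where "a = z - proj z"
  define b where "b = proj z - proj z'"
  have dpos: "0 < d" using d by (simp add: d_def)
  have A: "a \<bullet> a = d^2" using proj(2)[of z] by (simp add: a_def d_def dist_norm power2_norm_eq_inner[symmetric])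
  have B: "b \<bullet> b = (dist (proj z) (proj z'))^2" by (simp add: b_def dist_norm power2_norm_eq_inner)
  have "d \<le> dist z (proj z')" unfolding d_def by (rule infdist_le) (rule proj)
  then have "d^2 \<le> (norm (a + b))^2" using dpos by (simp add: a_def b_def dist_norm power_mono)
  then have ab: "0 \<le> 2 * (a \<bullet> b) + b \<bullet> b"
    using A by (simp add: power2_norm_eq_inner inner_add_left inner_add_right inner_commute)
  have zz: "z' - proj z' = (1 + h/d) *\<^sub>R a + b"
    by (simp add: z'_def a_def b_def d_def algebra_simps)
  have "(infdist z' M)^2 = (norm ((1 + h/d) *\<^sub>R a + b))^2"
    using proj(2)[of z'] zz by (simp add: dist_norm)
  also have "\<dots> = (1 + h/d)^2 * (a \<bullet> a) + 2 * (1 + h/d) * (a \<bullet> b) + b \<bullet> b"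
    by (simp only: power2_norm_eq_inner) (simp add: inner_add_left inner_add_right inner_commute power2_eq_square algebra_simps)
  also have "\<dots> \<ge> (d + h)^2 - (h/d) * (b \<bullet> b)"
  proof -
    have "(1 + h/d)^2 * (a \<bullet> a) = (d + h)^2" using A dpos by (simp add: field_simps power2_eq_square)
    moreover have "2 * (1 + h/d) * (a \<bullet> b) \<ge> - (1 + h/d) * (b \<bullet> b)"
    proof -
      have "0 \<le> (1 + h/d) * (2 * (a \<bullet> b) + b \<bullet> b)" using ab h dpos by simp
      then show ?thesis by (simp add: algebra_simps)
    qed
    ultimately show ?thesis by (simp add: algebra_simps)
  qed
  finally have sq: "(d + h)^2 - (h/d) * (b \<bullet> b) \<le> (infdist z' M)^2" .
  define E where "E = (h/d) * (b \<bullet> b)"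
  have E0: "0 \<le> E" using h dpos by (simp add: E_def)
  define X where "X = infdist z' M"
  have X0: "0 \<le> X" by (simp add: X_def infdist_nonneg)
  have Y: "0 < d + h" using dpos h by simp
  have "X \<ge> (d + h) - E / d"
  proof (cases "X \<ge> d + h")
    case True
    then show ?thesis using E0 dpos by (smt (verit) divide_nonneg_pos)
  next
    case False
    have "(d + h - X) * (d + h + X) \<le> E" using sq by (simp add: X_def E_def power2_eq_square algebra_simps)
    moreover have "(d + h - X) * d \<le> (d + h - X) * (d + h + X)"
      using False X0 h by (intro mult_left_mono) auto
    ultimately have "(d + h - X) * d \<le> E" by linarith
    then have "d + h - X \<le> E / d" using dpos by (simp add: field_simps)
    then show ?thesis by simp
  qed
  moreover have "E / d = h * (dist (proj z) (proj z'))^2 / d^2"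
    using dpos B by (simp add: E_def field_simps power2_eq_square)
  ultimately show ?thesis by (simp add: X_def d_def)
qed


lemma ray_approx:
  assumes p: "p \<in> M" and n: "norm n = 1" and l0: "0 < l0" and d0: "infdist (p + l0 *\<^sub>R n) M = l0"
    and s: "0 < s" "l0 + s < r" and k: "0 < \<kappa>" "\<kappa> \<le> 1"
  shows "\<exists>z. dist z (p + l0 *\<^sub>R n) \<le> s \<and> l0 + s * (1 - \<kappa>) \<le> infdist z M"
proof -
  define y0 where "y0 = p + l0 *\<^sub>R n"
  define l2 where "l2 = (l0 + s + r)/2"
  define K where "K = cball p l2 \<inter> {z. l0/2 \<le> infdist z M}"
  have Kc: "compact K" unfolding K_def
    by (intro compact_Int_closed compact_cball closed_Collect_le continuous_intros)
  have KS: "K \<subseteq> {z. infdist z M < r}"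
  proof
    fix z assume "z \<in> K"
    then have "dist p z \<le> l2" by (simp add: K_def)
    moreover have "infdist z M \<le> dist z p" by (rule infdist_le[OF p])
    ultimately show "z \<in> {z. infdist z M < r}" using s by (simp add: l2_def dist_commute)
  qed
  have uc: "uniformly_continuous_on K proj"
    by (rule compact_uniformly_continuous[OF continuous_on_subset[OF proj_cont KS] Kc])
  define \<omega> where "\<omega> = l0 * sqrt \<kappa>"
  have wpos: "0 < \<omega>" using l0 k by (simp add: \<omega>_def)
  obtain hu where hu: "0 < hu" "\<forall>x\<in>K. \<forall>x'\<in>K. dist x' x < hu \<longrightarrow> dist (proj x') (proj x) < \<omega>"
    using uc[unfolded uniformly_continuous_on_def] wpos by blast
  define m where "m = min hu (l0/2)"
  have mpos: "0 < m" using hu l0 by (simp add: m_def)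
  obtain N :: nat where N: "s / m < real N" using reals_Archimedean2 by blast
  have Npos: "0 < real N" using N s mpos by (smt (verit) divide_pos_pos)
  define h where "h = s / real N"
  have hpos: "0 < h" using s Npos by (simp add: h_def)
  have hm: "h < m" using N mpos Npos s by (simp add: h_def field_simps)
  define step where "step z = z + (h / infdist z M) *\<^sub>R (z - proj z)" for z
  define zs where "zs k = (step ^^ k) y0" for k
  have dy0p: "dist y0 p = l0" using n l0 by (simp add: y0_def dist_norm)
  have inv: "k \<le> N \<Longrightarrow> dist (zs k) y0 \<le> real k * h \<and> l0 + real k * h * (1 - \<kappa>) \<le> infdist (zs k) M" for k
  proof (induction k)
    case 0 then show ?case by (simp add: zs_def y0_def d0)
  next
    case (Suc k)
    then have IH: "dist (zs k) y0 \<le> real k * h" "l0 + real k * h * (1 - \<kappa>) \<le> infdist (zs k) M" by auto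
    define z where "z = zs k"
    define d where "d = infdist z M"
    have "0 \<le> real k * h * (1 - \<kappa>)" using hpos k by simp
    then have dz: "l0 \<le> d" using IH by (simp add: d_def z_def)
    have dpos: "0 < d" using dz l0 by simp
    have kh: "real (Suc k) * h \<le> s"
    proof -
      have "real (Suc k) \<le> real N" using Suc.prems by simp
      then have "real (Suc k) * h \<le> real N * h" using hpos by (intro mult_right_mono) auto
      also have "real N * h = s" using Npos by (simp add: h_def)
      finally show ?thesis .
    qed
    have "dist z p \<le> dist z y0 + dist y0 p" by (rule dist_triangle)
    then have dzp: "dist z p \<le> real k * h + l0" using IH dy0p by (simp add: z_def)
    have zK: "z \<in> K" using dzp kh dz hpos s l0 unfolding K_def l2_def
      by (auto simp: dist_commute d_def field_simps)
    have nst: "dist (step z) z = h"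
    proof -
      have "dist (step z) z = norm ((h / d) *\<^sub>R (z - proj z))" by (simp add: step_def dist_norm d_def)
      also have "\<dots> = h / d * d" using proj(2)[of z] hpos dpos by (simp add: dist_norm d_def norm_minus_commute)
      finally show ?thesis using dpos by simp
    qed
    have "dist (step z) p \<le> dist (step z) z + dist z p" by (rule dist_triangle)
    moreover have "real (Suc k) * h = h + real k * h" by (simp add: algebra_simps)
    ultimately have dsp: "dist (step z) p \<le> l0 + s" using nst dzp kh by linarith
    have "infdist z M \<le> infdist (step z) M + dist z (step z)" by (rule infdist_triangle)
    then have "d - h \<le> infdist (step z) M" using nst by (simp add: d_def dist_commute)
    then have szK: "step z \<in> K" using dsp hm s l0 dz unfolding K_def l2_def m_def
      by (auto simp: dist_commute)
    have close: "dist (proj (step z)) (proj z) < \<omega>" using hu(2) zK szK nst hm by (simp add: m_def)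
    have est: "infdist (step z) M \<ge> d + h - h * (dist (proj z) (proj (step z)))^2 / d^2"
      using step_est[of z h] dpos hpos by (simp add: step_def d_def)
    have "(dist (proj z) (proj (step z)))^2 \<le> \<omega>^2"
      using close by (intro power_mono) (auto simp: dist_commute)
    also have "\<omega>^2 = l0^2 * \<kappa>" using k by (simp add: \<omega>_def power_mult_distrib)
    also have "l0^2 * \<kappa> \<le> d^2 * \<kappa>" using dz l0 k by (intro mult_right_mono power_mono) auto
    finally have "(dist (proj z) (proj (step z)))^2 / d^2 \<le> \<kappa>" using dpos by (simp add: field_simps)
    then have "h * (dist (proj z) (proj (step z)))^2 / d^2 \<le> h * \<kappa>"
      using hpos by (metis mult_left_mono less_imp_le times_divide_eq_right)
    then have st: "d + h - h * \<kappa> \<le> infdist (step z) M" using est by linarith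
    have zsS: "zs (Suc k) = step z" by (simp add: zs_def z_def)
    have "dist (step z) y0 \<le> dist (step z) z + dist z y0" by (rule dist_triangle)
    then have "dist (zs (Suc k)) y0 \<le> real (Suc k) * h" using nst IH zsS by (simp add: z_def algebra_simps)
    moreover have "l0 + real (Suc k) * h * (1 - \<kappa>) \<le> infdist (zs (Suc k)) M"
      using st IH(2) zsS by (simp add: d_def z_def algebra_simps)
    ultimately show ?case by simp
  qed
  have "real N * h = s" using Npos by (simp add: h_def)
  then show ?thesis using inv[of N] unfolding y0_def by auto
qed

lemma ray:
  assumes p: "p \<in> M" and n: "norm n = 1" and l0: "0 < l0" and d0: "infdist (p + l0 *\<^sub>R n) M = l0"
    and l1: "l0 \<le> l1" "l1 < r"
  shows "infdist (p + l1 *\<^sub>R n) M = l1"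
proof (cases "l1 = l0")
  case True then show ?thesis using d0 by simp
next
  case False
  define s where "s = l1 - l0"
  have s: "0 < s" "l0 + s < r" using False l1 by (auto simp: s_def)
  define y0 where "y0 = p + l0 *\<^sub>R n"
  obtain zm where zm: "zm \<in> cball y0 s" "\<forall>z\<in>cball y0 s. infdist z M \<le> infdist zm M"
    using continuous_attains_sup[OF compact_cball _ continuous_on_infdist[OF continuous_on_id], of y0 s M] s
    by auto
  have big: "l1 \<le> infdist zm M"
  proof (rule ccontr)
    assume "\<not> l1 \<le> infdist zm M"
    define g where "g = l1 - infdist zm M"
    have g: "0 < g" using \<open>\<not> l1 \<le> infdist zm M\<close> by (simp add: g_def)
    define kk where "kk = min (1::real) (g / (2 * s))"
    have k: "0 < kk" "kk \<le> 1" using g s by (auto simp: kk_def)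
    obtain z where z: "dist z y0 \<le> s" "l0 + s * (1 - kk) \<le> infdist z M"
      using ray_approx[OF p n l0 d0 s k] unfolding y0_def by blast
    have "s * kk \<le> g/2" using s by (simp add: kk_def min_def field_simps)
    then have "infdist zm M < infdist z M" using z(2) g by (simp add: g_def s_def algebra_simps)
    moreover have "z \<in> cball y0 s" using z(1) by (simp add: dist_commute)
    ultimately show False using zm(2) by force
  qed
  have dy0p: "dist y0 p = l0" using n l0 by (simp add: y0_def dist_norm)
  have "infdist zm M \<le> dist zm p" by (rule infdist_le[OF p])
  moreover have "dist zm p \<le> dist zm y0 + dist y0 p" by (rule dist_triangle)
  moreover have "dist zm y0 \<le> s" using zm(1) by (simp add: dist_commute)
  ultimately have eqs: "dist zm p = l1" "dist zm y0 = s" using big dy0p by (simp_all add: s_def)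
  have "norm ((zm - y0) + (y0 - p)) = norm (zm - y0) + norm (y0 - p)"
    using eqs dy0p by (simp add: dist_norm s_def)
  then have "norm (zm - y0) *\<^sub>R (y0 - p) = norm (y0 - p) *\<^sub>R (zm - y0)"
    by (rule norm_triangle_eq[THEN iffD1])
  then have "s *\<^sub>R (l0 *\<^sub>R n) = l0 *\<^sub>R (zm - y0)"
    using eqs dy0p by (simp add: dist_norm y0_def)
  then have "zm - y0 = s *\<^sub>R n" using l0 by (metis scaleR_left_commute scaleR_cancel_left less_irrefl)
  then have "zm = p + l1 *\<^sub>R n" by (simp add: y0_def s_def algebra_simps)
  then have "l1 \<le> infdist (p + l1 *\<^sub>R n) M" using big by simp
  moreover have "infdist (p + l1 *\<^sub>R n) M \<le> l1"
    using infdist_le[OF p, of "p + l1 *\<^sub>R n"] n l0 l1 by (simp add: dist_norm)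
  ultimately show ?thesis by simp
qed

end


context posreach
begin

lemma normal_ineq:
  assumes zr: "infdist z M < r" and b: "b \<in> M"
  shows "(z - proj z) \<bullet> (b - proj z) \<le> infdist z M * (norm (b - proj z))^2 / (2*r)"
proof (cases "infdist z M = 0")
  case True
  then have "z \<in> M" using in_closed_iff_infdist_zero[OF closedM neM] by simp
  then show ?thesis using True by (simp add: proj_id)
next
  case False
  define d where "d = infdist z M"
  define p where "p = proj z"
  have dpos: "0 < d" using False infdist_nonneg[of z M] by (simp add: d_def)
  define n where "n = (1/d) *\<^sub>R (z - p)"
  have nz: "norm (z - p) = d" using proj(2)[of z] by (simp add: d_def p_def dist_norm)
  have n1: "norm n = 1" using nz dpos by (simp add: n_def)
  have zeq: "z = p + d *\<^sub>R n" using dpos by (simp add: n_def)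
  have pM: "p \<in> M" by (simp add: p_def proj)
  have d0: "infdist (p + d *\<^sub>R n) M = d" using zeq by (simp add: d_def)
  have nn: "n \<bullet> n = 1" using n1 by (simp add: power2_norm_eq_inner[symmetric])
  define A where "A = n \<bullet> (b - p)"
  define B where "B = (norm (b - p))^2"
  have key: "2 * l * A \<le> B" if l: "d \<le> l" "l < r" for l
  proof -
    have "infdist (p + l *\<^sub>R n) M = l" by (rule ray[OF pM n1 dpos d0 l])
    then have "l \<le> norm (p + l *\<^sub>R n - b)" using infdist_le[OF b, of "p + l *\<^sub>R n"] by (simp add: dist_norm)
    then have "l^2 \<le> (norm ((p - b) + l *\<^sub>R n))^2" using l dpos by (intro power_mono) (auto simp: algebra_simps)
    also have "\<dots> = B + 2 * l * (n \<bullet> (p - b)) + l^2"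
      using n1 nn unfolding B_def
      by (simp only: power2_norm_eq_inner) (simp add: inner_add_left inner_add_right inner_commute algebra_simps norm_minus_commute power2_eq_square)
    finally show ?thesis by (simp add: A_def inner_diff_right algebra_simps)
  qed
  have AB: "A \<le> B / (2*r)"
  proof (rule ccontr)
    assume "\<not> A \<le> B / (2*r)"
    then have Ab: "B / (2*r) < A" by simp
    have B0: "0 \<le> B" by (simp add: B_def)
    have Apos: "0 < A" using Ab B0 rpos by (smt (verit) divide_nonneg_pos)
    have q: "B / (2*A) < r" using Ab Apos rpos by (simp add: field_simps)
    define l where "l = max d ((B / (2*A) + r)/2)"
    have dr: "d < r" using zr by (simp add: d_def)
    have l: "d \<le> l" "l < r" using q dr by (auto simp: l_def)
    have "B / (2*A) < (B / (2*A) + r)/2" using q by (simp add: field_simps)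
    then have "B / (2*A) < l" unfolding l_def by (rule less_le_trans) simp
    then have "B < 2 * l * A" using Apos by (simp add: field_simps)
    then show False using key[OF l] by simp
  qed
  have "(z - p) \<bullet> (b - p) = d * A" using zeq by (simp add: A_def)
  also have "\<dots> \<le> d * (B / (2*r))" using AB dpos by (intro mult_left_mono) auto
  finally show ?thesis by (simp add: d_def p_def B_def)
qed

lemma proj_lip:
  assumes q: "q < r" and x: "infdist x M \<le> q" and y: "infdist y M \<le> q"
  shows "norm (proj x - proj y) \<le> r / (r - q) * norm (x - y)"
proof -
  define a where "a = proj x"
  define b where "b = proj y"
  have aM: "a \<in> M" and bM: "b \<in> M" by (simp_all add: a_def b_def proj)
  have xr: "infdist x M < r" and yr: "infdist y M < r" using q x y by auto
  have q0: "0 \<le> q" using x infdist_nonneg[of x M] by simp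
  have n1: "(x - a) \<bullet> (b - a) \<le> q * (norm (b - a))^2 / (2*r)"
  proof -
    have "(x - a) \<bullet> (b - a) \<le> infdist x M * (norm (b - a))^2 / (2*r)"
      using normal_ineq[OF xr bM] by (simp add: a_def)
    also have "\<dots> \<le> q * (norm (b - a))^2 / (2*r)"
      using x rpos by (intro divide_right_mono mult_right_mono) auto
    finally show ?thesis .
  qed
  have n2: "(y - b) \<bullet> (a - b) \<le> q * (norm (b - a))^2 / (2*r)"
  proof -
    have "(y - b) \<bullet> (a - b) \<le> infdist y M * (norm (a - b))^2 / (2*r)"
      using normal_ineq[OF yr aM] by (simp add: b_def)
    also have "\<dots> \<le> q * (norm (a - b))^2 / (2*r)"
      using y rpos by (intro divide_right_mono mult_right_mono) auto
    finally show ?thesis by (simp add: norm_minus_commute)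
  qed
  have sum: "(x - a) \<bullet> (b - a) + (y - b) \<bullet> (a - b) = (norm (b - a))^2 - (y - x) \<bullet> (b - a)"
    by (simp only: power2_norm_eq_inner) (simp add: inner_diff_left inner_diff_right inner_commute algebra_simps)
  have e1: "(norm (b - a))^2 * (1 - q/r) = (norm (b - a))^2 - q * (norm (b - a))^2 / r"
    by (simp add: algebra_simps)
  have e2: "q * (norm (b - a))^2 / (2*r) + q * (norm (b - a))^2 / (2*r) = q * (norm (b - a))^2 / r"
    by (simp add: field_simps)
  have "(norm (b - a))^2 * (1 - q/r) \<le> (y - x) \<bullet> (b - a)"
    using n1 n2 sum e1 e2 by linarith
  also have "\<dots> \<le> norm (y - x) * norm (b - a)" by (rule norm_cauchy_schwarz)
  finally have main: "(norm (b - a))^2 * (1 - q/r) \<le> norm (y - x) * norm (b - a)" .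
  show ?thesis
  proof (cases "norm (b - a) = 0")
    case True
    then show ?thesis using q q0 rpos by (simp add: a_def b_def)
  next
    case False
    then have pos: "0 < norm (b - a)" by simp
    have "norm (b - a) * (1 - q/r) \<le> norm (y - x)"
      using main pos by (simp add: power2_eq_square mult.assoc mult_le_cancel_left_pos)
    then have "norm (b - a) * (r - q) \<le> norm (y - x) * r" using rpos by (simp add: field_simps)
    then have "norm (b - a) \<le> r / (r - q) * norm (y - x)" using q by (simp add: field_simps)
    then show ?thesis by (simp add: a_def b_def norm_minus_commute)
  qed
qed


lemma seg_bound:
  assumes u: "u \<in> M" and v: "v \<in> M" and t: "norm (v - u) < 2*r"
  shows "geodesic_dist M u v \<le> ereal (r / (r - norm (v - u)/2) * norm (v - u))"
proof -
  define t where "t = norm (v - u)"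
  define g where "g s = proj (u + s *\<^sub>R (v - u))" for s
  have tr: "t/2 < r" using t by (simp add: t_def)
  have t0: "0 \<le> t" by (simp add: t_def)
  have dseg: "infdist (u + s *\<^sub>R (v - u)) M \<le> t/2" if s: "s \<in> {0..1}" for s
  proof (cases "s \<le> 1/2")
    case True
    have "infdist (u + s *\<^sub>R (v - u)) M \<le> dist (u + s *\<^sub>R (v - u)) u" by (rule infdist_le[OF u])
    also have "\<dots> = s * t" using s by (simp add: dist_norm t_def)
    also have "\<dots> \<le> t/2" using mult_right_mono[OF True t0] by simp
    finally show ?thesis .
  next
    case False
    have "infdist (u + s *\<^sub>R (v - u)) M \<le> dist (u + s *\<^sub>R (v - u)) v" by (rule infdist_le[OF v])
    also have "u + s *\<^sub>R (v - u) - v = (1 - s) *\<^sub>R (u - v)" by (simp add: algebra_simps)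
    then have "dist (u + s *\<^sub>R (v - u)) v = (1 - s) * t"
      using s by (simp add: dist_norm t_def norm_minus_commute)
    also have "(1 - s) * t \<le> t/2" using mult_right_mono[of "1 - s" "1/2" t] False t0 by simp
    finally show ?thesis .
  qed
  have cin: "curve_in M u v g 1"
    unfolding curve_in_def
  proof (intro conjI)
    show "continuous_on {0..1} g" unfolding g_def
    proof (rule continuous_on_compose2[OF proj_cont])
      show "continuous_on {0..1} (\<lambda>s. u + s *\<^sub>R (v - u))" by (intro continuous_intros)
      show "(\<lambda>s. u + s *\<^sub>R (v - u)) ` {0..1} \<subseteq> {z. infdist z M < r}" using dseg tr by force
    qed
    show "g ` {0..1} \<subseteq> M" by (auto simp: g_def proj)
    show "g 0 = u" by (simp add: g_def proj_id u)
    show "g 1 = v" by (simp add: g_def proj_id v)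
  qed simp
  define L where "L = r / (r - t/2) * t"
  have lip: "norm (g y - g x) \<le> L * \<bar>y - x\<bar>" if "x \<in> {0..1}" "y \<in> {0..1}" for x y
  proof -
    have "norm (g y - g x) \<le> r / (r - t/2) * norm ((u + y *\<^sub>R (v - u)) - (u + x *\<^sub>R (v - u)))"
      unfolding g_def by (rule proj_lip[OF tr dseg[OF that(2)] dseg[OF that(1)]])
    also have "(u + y *\<^sub>R (v - u)) - (u + x *\<^sub>R (v - u)) = (y - x) *\<^sub>R (v - u)" by (simp add: algebra_simps)
    finally show ?thesis by (simp add: L_def t_def ac_simps)
  qed
  have L0: "0 \<le> L" using tr t0 rpos by (simp add: L_def)
  have "curve_length g 1 \<le> ereal L"
  proof (rule cl_le)
    fix ts :: "real list" assume ts: "sorted ts" "set ts \<subseteq> {0..1}"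
    have "psum (map g ts) \<le> L * psum ts" using ts(2) by (intro psum_map_lip lip) auto
    also have "psum ts \<le> 1"
    proof (cases "ts = []")
      case False
      then have "last ts \<in> set ts" "hd ts \<in> set ts" by simp_all
      then have "last ts \<in> {0..1}" "hd ts \<in> {0..1}" using ts(2) by blast+
      then show ?thesis using psum_sorted[OF ts(1) False] by simp
    qed simp
    then have "L * psum ts \<le> L" using L0 by (simp add: mult_left_le)
    finally show "ereal (psum (map g ts)) \<le> ereal L" by simp
  qed
  then show ?thesis using gd_le[OF cin] by (simp add: L_def t_def)
qed


lemma midpoint_split:
  assumes u: "u \<in> M" and v: "v \<in> M" and t: "norm (v - u) < 2*r"
  shows "\<exists>z\<in>M. norm (z - u) \<le> norm (v - u)/2 + (norm (v - u))^2/(4*r)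
          \<and> norm (v - z) \<le> norm (v - u)/2 + (norm (v - u))^2/(4*r)
          \<and> arcsin (norm (z - u)/(2*r)) + arcsin (norm (v - z)/(2*r)) \<le> arcsin (norm (v - u)/(2*r))"
proof -
  define t where "t = norm (v - u)"
  define m where "m = (1/2) *\<^sub>R (u + v)"
  define z where "z = proj m"
  define \<rho> where "\<rho> = infdist m M"
  define w where "w = m - z"
  define e where "e = u - m"
  define a where "a = norm (z - u)"
  define b where "b = norm (v - z)"
  have mm: "m + m = u + v" unfolding m_def by (simp add: scaleR_left_distrib[symmetric])
  have t0: "0 \<le> t" by (simp add: t_def)
  have tr: "t < 2*r" using t by (simp add: t_def)
  have zM: "z \<in> M" by (simp add: z_def proj)
  have nw: "norm w = \<rho>" using proj(2)[of m] by (simp add: w_def z_def \<rho>_def dist_norm)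
  have ne: "norm e = t/2"
  proof -
    have "e = (1/2) *\<^sub>R (u - v)"
    proof -
      have "e + e = u - v" using mm by (simp add: e_def algebra_simps)
      then show ?thesis by (metis add_diff_cancel_left' scaleR_half_double)
    qed
    then show ?thesis by (simp add: t_def norm_minus_commute)
  qed
  have uz: "u - z = w + e" by (simp add: w_def e_def)
  have vz: "v - z = w - e"
  proof -
    have "w - e = (m + m) - z - u" by (simp add: w_def e_def algebra_simps)
    then show ?thesis using mm by simp
  qed
  have rho_le: "\<rho> \<le> t/2"
  proof -
    have "\<rho> \<le> dist m u" unfolding \<rho>_def by (rule infdist_le[OF u])
    also have "dist m u = t/2" using ne by (simp add: dist_norm e_def norm_minus_commute)
    finally show ?thesis .
  qed
  have rho0: "0 \<le> \<rho>" by (simp add: \<rho>_def infdist_nonneg)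
  have mr: "infdist m M < r" using rho_le tr by (simp add: \<rho>_def)
  have n1: "w \<bullet> (u - z) \<le> \<rho> * a^2 / (2*r)"
    using normal_ineq[OF mr u] by (simp add: w_def z_def \<rho>_def a_def norm_minus_commute)
  have n2: "w \<bullet> (v - z) \<le> \<rho> * b^2 / (2*r)"
    using normal_ineq[OF mr v] by (simp add: w_def z_def \<rho>_def b_def)
  have a2: "a^2 = \<rho>^2 + 2 * (w \<bullet> e) + t^2/4"
  proof -
    have "a^2 = (norm (w + e))^2" using uz by (simp add: a_def norm_minus_commute)
    also have "\<dots> = w \<bullet> w + 2 * (w \<bullet> e) + e \<bullet> e"
      by (simp only: power2_norm_eq_inner) (simp add: inner_add_left inner_add_right inner_commute)
    finally show ?thesis using nw ne by (simp add: power2_norm_eq_inner[symmetric] power_divide)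
  qed
  have b2: "b^2 = \<rho>^2 - 2 * (w \<bullet> e) + t^2/4"
  proof -
    have "b^2 = (norm (w - e))^2" using vz by (simp add: b_def)
    also have "\<dots> = w \<bullet> w - 2 * (w \<bullet> e) + e \<bullet> e"
      by (simp only: power2_norm_eq_inner) (simp add: inner_diff_left inner_diff_right inner_commute)
    finally show ?thesis using nw ne by (simp add: power2_norm_eq_inner[symmetric] power_divide)
  qed
  have S: "a^2 + b^2 = 2 * \<rho>^2 + t^2/2" using a2 b2 by simp
  have wsum: "w \<bullet> (u - z) + w \<bullet> (v - z) = 2 * \<rho>^2"
    using uz vz nw by (simp add: inner_add_right inner_diff_right power2_norm_eq_inner[symmetric])
  have key: "2 * \<rho>^2 \<le> \<rho> * (2 * \<rho>^2 + t^2/2) / (2*r)"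
  proof -
    have "2 * \<rho>^2 \<le> \<rho> * a^2 / (2*r) + \<rho> * b^2 / (2*r)" using n1 n2 wsum by linarith
    also have "\<dots> = \<rho> * (a^2 + b^2) / (2*r)" by (simp add: distrib_left add_divide_distrib)
    finally show ?thesis using S by simp
  qed
  define c where "c = sqrt (r^2 - t^2/4)"
  have tt: "t^2 < (2*r)^2" using tr t0 by (intro power_strict_mono) auto
  then have rt4: "0 < r^2 - t^2/4" by (simp add: power_mult_distrib)
  have c2: "c^2 = r^2 - t^2/4" using rt4 unfolding c_def by (intro real_sqrt_pow2) simp
  have cpos: "0 < c" unfolding c_def using rt4 by simp
  have cr: "c \<le> r"
  proof -
    have "c \<le> sqrt (r^2)" unfolding c_def by (rule real_sqrt_le_mono) simp
    then show ?thesis using rpos by simp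
  qed
  have rho_c: "\<rho> \<le> r - c"
  proof (cases "\<rho> = 0")
    case True then show ?thesis using cr by simp
  next
    case False
    then have rp: "0 < \<rho>" using rho0 by simp
    have "2 * \<rho>^2 * (2*r) \<le> \<rho> * (2 * \<rho>^2 + t^2/2)" using key rpos by (simp add: field_simps)
    then have "\<rho> * (4 * r * \<rho>) \<le> \<rho> * (2 * \<rho>^2 + t^2/2)" by (simp add: power2_eq_square algebra_simps)
    then have "4 * r * \<rho> \<le> 2 * \<rho>^2 + t^2/2" using rp by simp
    then have "c^2 \<le> (r - \<rho>)^2" using c2 by (simp add: power2_eq_square algebra_simps)
    moreover have "0 \<le> r - \<rho>" using rho_le tr by simp
    ultimately have "c \<le> r - \<rho>" by (rule power2_le_imp_le)
    then show ?thesis by simp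
  qed
  have rc: "r - c \<le> t^2/(4*r)"
  proof -
    have "(r - c) * (r + c) = t^2/4" using c2 by (simp add: algebra_simps power2_eq_square)
    moreover have "(r - c) * r \<le> (r - c) * (r + c)" using cr cpos by (intro mult_left_mono) auto
    ultimately have "(r - c) * r \<le> t^2/4" by simp
    then show ?thesis using rpos by (simp add: field_simps)
  qed
  have abound: "a \<le> t/2 + t^2/(4*r)"
  proof -
    have "a \<le> norm w + norm e" using uz norm_triangle_ineq[of w e] by (simp add: a_def norm_minus_commute)
    then show ?thesis using nw ne rho_c rc by simp
  qed
  have bbound: "b \<le> t/2 + t^2/(4*r)"
  proof -
    have "b \<le> norm w + norm e" using vz norm_triangle_ineq4[of w e] by (simp add: b_def)
    then show ?thesis using nw ne rho_c rc by simp
  qed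
  have Sle: "a^2 + b^2 \<le> 4*r^2 - 4*r*c"
  proof -
    have "\<rho>^2 \<le> (r - c)^2" using rho_c rho0 by (intro power_mono) auto
    moreover have "(r - c)^2 = r^2 - 2*r*c + c^2" by (simp add: power2_diff)
    ultimately show ?thesis using S c2 by linarith
  qed
  have a0: "0 \<le> a" and b0: "0 \<le> b" by (simp_all add: a_def b_def)
  have a2r: "a \<le> 2*r"
  proof -
    have "0 \<le> 4*r*c" using cpos rpos by simp
    moreover have "0 \<le> b^2" by simp
    ultimately have "a^2 \<le> 4*r^2" using Sle by linarith
    moreover have "(2*r)^2 = 4*r^2" by (simp add: power_mult_distrib)
    ultimately have "a^2 \<le> (2*r)^2" by simp
    moreover have "0 \<le> 2*r" using rpos by simp
    ultimately show ?thesis by (rule power2_le_imp_le)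
  qed
  have b2r: "b \<le> 2*r"
  proof -
    have "0 \<le> 4*r*c" using cpos rpos by simp
    moreover have "0 \<le> a^2" by simp
    ultimately have "b^2 \<le> 4*r^2" using Sle by linarith
    moreover have "(2*r)^2 = 4*r^2" by (simp add: power_mult_distrib)
    ultimately have "b^2 \<le> (2*r)^2" by simp
    moreover have "0 \<le> 2*r" using rpos by simp
    ultimately show ?thesis by (rule power2_le_imp_le)
  qed
  define \<alpha> where "\<alpha> = arcsin (a/(2*r))"
  define \<beta> where "\<beta> = arcsin (b/(2*r))"
  define \<theta> where "\<theta> = arcsin (t/(2*r))"
  have xa: "0 \<le> a/(2*r)" "a/(2*r) \<le> 1" using a0 a2r rpos by auto
  have xb: "0 \<le> b/(2*r)" "b/(2*r) \<le> 1" using b0 b2r rpos by auto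
  have xt: "0 \<le> t/(2*r)" "t/(2*r) < 1" using t0 tr rpos by auto
  have sa: "sin \<alpha> = a/(2*r)" using xa by (simp add: \<alpha>_def)
  have sb: "sin \<beta> = b/(2*r)" using xb by (simp add: \<beta>_def)
  have ra: "0 \<le> \<alpha>" "\<alpha> \<le> pi/2" using xa arcsin_bounded[of "a/(2*r)"] arcsin_le_arcsin[of 0 "a/(2*r)"]
    by (auto simp: \<alpha>_def)
  have rb: "0 \<le> \<beta>" "\<beta> \<le> pi/2" using xb arcsin_bounded[of "b/(2*r)"] arcsin_le_arcsin[of 0 "b/(2*r)"]
    by (auto simp: \<beta>_def)
  have rt: "0 \<le> \<theta>" "\<theta> < pi/2"
  proof -
    show "0 \<le> \<theta>" using xt arcsin_le_arcsin[of 0 "t/(2*r)"] by (simp add: \<theta>_def)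
    have "arcsin (t/(2*r)) < arcsin 1" using xt by (intro arcsin_less_arcsin) auto
    then show "\<theta> < pi/2" by (simp add: \<theta>_def)
  qed
  have ct: "cos \<theta> = c / r"
  proof -
    have "cos \<theta> = sqrt (1 - (t/(2*r))^2)" using xt by (simp add: \<theta>_def cos_arcsin)
    also have "1 - (t/(2*r))^2 = (c/r)^2"
    proof -
      have "(c/r)^2 = (r^2 - t^2/4)/r^2" by (simp add: power_divide c2)
      also have "\<dots> = 1 - (t/(2*r))^2" using rpos by (simp add: field_simps power_divide power_mult_distrib)
      finally show ?thesis by simp
    qed
    also have "sqrt ((c/r)^2) = c/r" using cpos rpos by simp
    finally show ?thesis .
  qed
  have "(sin \<alpha>)^2 + (sin \<beta>)^2 = (a^2 + b^2)/(4*r^2)" unfolding sa sb by (simp add: power_divide add_divide_distrib power_mult_distrib)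
  also have "\<dots> \<le> (4*r^2 - 4*r*c)/(4*r^2)" by (rule divide_right_mono[OF Sle]) simp
  also have "\<dots> = 1 - c/r" using rpos by (simp add: field_simps power2_eq_square)
  also have "\<dots> = 1 - cos \<theta>" by (simp add: ct)
  finally have "\<alpha> + \<beta> \<le> \<theta>" by (rule angle_sum[OF ra rb rt])
  then have fin: "arcsin (a/(2*r)) + arcsin (b/(2*r)) \<le> arcsin (t/(2*r))"
    by (simp only: \<alpha>_def \<beta>_def \<theta>_def)
  have f1: "norm (z - u) \<le> norm (v - u)/2 + (norm (v - u))^2/(4*r)" using abound by (simp only: a_def t_def)
  have f2: "norm (v - z) \<le> norm (v - u)/2 + (norm (v - u))^2/(4*r)" using bbound by (simp only: b_def t_def)
  have f3: "arcsin (norm (z - u)/(2*r)) + arcsin (norm (v - z)/(2*r)) \<le> arcsin (norm (v - u)/(2*r))"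
    using fin by (simp only: a_def b_def t_def)
  show ?thesis using zM f1 f2 f3 by blast
qed

end


lemma chord_le_arc:
  fixes c r :: real assumes "0 < r" "0 \<le> c" "c \<le> 2*r"
  shows "c \<le> 2*r*arcsin (c/(2*r))"
proof -
  define x where "x = c/(2*r)"
  have x: "0 \<le> x" "x \<le> 1" using assms by (auto simp: x_def)
  have "0 \<le> arcsin x" using x arcsin_le_arcsin[of 0 x] by simp
  then have "sin (arcsin x) \<le> arcsin x" by (rule sin_x_le_x)
  then have "x \<le> arcsin x" using x by simp
  then have "2*r*x \<le> 2*r*arcsin x" using assms by simp
  then show ?thesis using assms by (simp add: x_def)
qed

context posreach
begin

lemma subdivide:
  assumes T0: "T0 < 2*r"
  shows "0 \<le> T \<Longrightarrow> T \<le> T0 \<Longrightarrow> u \<in> M \<Longrightarrow> v \<in> M \<Longrightarrow> norm (v - u) \<le> T \<Longrightarrow>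
    \<exists>ws. ws \<noteq> [] \<and> hd ws = u \<and> last ws = v \<and> set ws \<subseteq> M \<and> gaps ((1/2 + T0/(4*r))^k * T) ws
       \<and> csum (\<lambda>c. arcsin (c/(2*r))) ws \<le> arcsin (norm (v - u)/(2*r))"
proof (induction k arbitrary: T u v)
  case 0
  then show ?case by (intro exI[of _ "[u, v]"]) auto
next
  case (Suc k)
  define q where "q = 1/2 + T0/(4*r)"
  define t where "t = norm (v - u)"
  have t0: "0 \<le> t" and tT: "t \<le> T" using Suc by (auto simp: t_def)
  have q1: "q \<le> 1" using T0 rpos by (simp add: q_def field_simps)
  have q0: "0 \<le> q" using T0 rpos Suc.prems(1,2) by (simp add: q_def)
  have t2r: "norm (v - u) < 2*r" using Suc.prems T0 by simp
  obtain z where z: "z \<in> M" "norm (z - u) \<le> t/2 + t^2/(4*r)" "norm (v - z) \<le> t/2 + t^2/(4*r)"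
    "arcsin (norm (z - u)/(2*r)) + arcsin (norm (v - z)/(2*r)) \<le> arcsin (t/(2*r))"
    using midpoint_split[OF Suc.prems(3,4) t2r] unfolding t_def by blast
  have "t^2/(4*r) \<le> t * T0/(4*r)"
  proof -
    have "t * t \<le> t * T0" using t0 tT Suc.prems(2) by (intro mult_left_mono) auto
    then show ?thesis using rpos by (simp add: power2_eq_square divide_right_mono)
  qed
  then have "t/2 + t^2/(4*r) \<le> q * t" by (simp add: q_def algebra_simps)
  also have "q * t \<le> q * T" using q0 tT by (intro mult_left_mono)
  finally have qT: "t/2 + t^2/(4*r) \<le> q * T" .
  have qT0: "0 \<le> q * T" "q * T \<le> T0" using q0 q1 Suc.prems(1,2)
    by (auto intro: order_trans[OF mult_left_le_one_le])
  obtain ws1 where w1: "ws1 \<noteq> []" "hd ws1 = u" "last ws1 = z" "set ws1 \<subseteq> M" "gaps (q^k * (q*T)) ws1"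
     "csum (\<lambda>c. arcsin (c/(2*r))) ws1 \<le> arcsin (norm (z - u)/(2*r))"
    using Suc.IH[OF qT0 Suc.prems(3) z(1)] z(2) qT unfolding q_def by fastforce
  obtain ws2 where w2: "ws2 \<noteq> []" "hd ws2 = z" "last ws2 = v" "set ws2 \<subseteq> M" "gaps (q^k * (q*T)) ws2"
     "csum (\<lambda>c. arcsin (c/(2*r))) ws2 \<le> arcsin (norm (v - z)/(2*r))"
    using Suc.IH[OF qT0 z(1) Suc.prems(4)] z(3) qT unfolding q_def by fastforce
  have j: "last ws1 = hd ws2" using w1 w2 by simp
  define ws where "ws = ws1 @ tl ws2"
  have "ws \<noteq> []" using w1 by (simp add: ws_def)
  moreover have "hd ws = u" using w1 by (simp add: ws_def)
  moreover have "last ws = v"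
  proof (cases "tl ws2 = []")
    case True
    then have "ws2 = [hd ws2]" using w2(1) by (cases ws2) auto
    then have "last ws2 = hd ws2" by (metis last_ConsL)
    then show ?thesis using True w1 w2 by (simp add: ws_def)
  next
    case False
    then show ?thesis using w2 by (simp add: ws_def last_tl)
  qed
  moreover have "set ws \<subseteq> M" using w1 w2 by (auto simp: ws_def dest: list.set_sel(2))
  moreover have "gaps (q^Suc k * T) ws"
    using gaps_join[OF w1(1) w2(1) j] w1(5) w2(5) by (simp add: ws_def mult.assoc mult.commute mult.left_commute)
  moreover have "csum (\<lambda>c. arcsin (c/(2*r))) ws \<le> arcsin (norm (v - u)/(2*r))"
    using csum_join[OF w1(1) w2(1) j] w1(6) w2(6) z(4) by (simp add: ws_def t_def)
  ultimately show ?case unfolding q_def by blast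
qed


lemma gd_arc:
  assumes gc: "geodesically_convex M" and u: "u \<in> M" and v: "v \<in> M" and t: "norm (v - u) < 2*r"
  shows "geodesic_dist M u v \<le> ereal (2*r*arcsin (norm (v - u)/(2*r)))"
proof -
  define t where "t = norm (v - u)"
  define q where "q = 1/2 + t/(4*r)"
  define A where "A = 2*r*arcsin (t/(2*r))"
  define K where "K k = r / (r - q^k * t / 2)" for k :: nat
  have t0: "0 \<le> t" and tr: "t < 2*r" using t by (auto simp: t_def)
  have q0: "0 \<le> q" and q1: "q < 1" using t0 tr rpos by (auto simp: q_def field_simps)
  have bound: "geodesic_dist M u v \<le> ereal (K k * A)" for k
  proof -
    define C where "C = q^k * t"
    have C0: "0 \<le> C" using q0 t0 by (simp add: C_def)
    have Ct: "C \<le> t" using q0 q1 t0 unfolding C_def by (intro mult_left_le_one_le) (auto intro: power_le_one)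
    have Cr: "C/2 < r" using Ct tr by simp
    obtain ws where ws: "ws \<noteq> []" "hd ws = u" "last ws = v" "set ws \<subseteq> M" "gaps C ws"
      "csum (\<lambda>c. arcsin (c/(2*r))) ws \<le> arcsin (t/(2*r))"
      using subdivide[OF tr t0 order_refl u v] unfolding t_def q_def C_def by (auto simp: t_def)
    define f where "f c = r / (r - C/2) * (2*r*arcsin (c/(2*r)))" for c
    have loc: "geodesic_dist M x y \<le> ereal (f (norm (y - x)))"
      if xy: "x \<in> M" "y \<in> M" "norm (y - x) \<le> C" for x y
    proof -
      define c where "c = norm (y - x)"
      have c0: "0 \<le> c" and cC: "c \<le> C" using xy by (auto simp: c_def)
      have c2r: "c < 2*r" using cC Cr by simp
      have "geodesic_dist M x y \<le> ereal (r / (r - c/2) * c)"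
        using seg_bound[OF xy(1,2)] c2r by (simp add: c_def)
      also have "r / (r - c/2) * c \<le> r / (r - C/2) * c"
        using c0 cC Cr rpos by (intro mult_right_mono divide_left_mono mult_pos_pos) auto
      also have "\<dots> \<le> f c" unfolding f_def
        using chord_le_arc[OF rpos c0] c2r Cr rpos by (intro mult_left_mono) auto
      finally show ?thesis by (simp add: c_def)
    qed
    have "geodesic_dist M (hd ws) (last ws) \<le> ereal (csum f ws)"
      by (rule gd_chain[OF gc loc ws(1,4,5)])
    also have "csum f ws = (r / (r - C/2) * (2*r)) * csum (\<lambda>c. arcsin (c/(2*r))) ws"
      unfolding f_def by (simp add: csum_cmult[symmetric] mult.assoc)
    also have "\<dots> \<le> (r / (r - C/2) * (2*r)) * arcsin (t/(2*r))"
      using ws(6) Cr rpos by (intro mult_left_mono) auto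
    finally show ?thesis using ws by (simp add: K_def A_def C_def mult.assoc)
  qed
  have lim: "(\<lambda>k. K k * A) \<longlonglongrightarrow> 1 * A"
  proof -
    have "(\<lambda>k. q^k) \<longlonglongrightarrow> 0" using q0 q1 by (intro LIMSEQ_power_zero) auto
    then have "(\<lambda>k. r / (r - q^k * t / 2)) \<longlonglongrightarrow> r / (r - 0 * t / 2)"
      using rpos q0 q1 by (intro tendsto_intros) auto
    moreover have "K = (\<lambda>k. r / (r - q^k * t / 2))" by (simp add: K_def fun_eq_iff)
    ultimately have "K \<longlonglongrightarrow> 1" using rpos by simp
    then show ?thesis by (intro tendsto_intros)
  qed
  have nonneg: "0 \<le> geodesic_dist M u v" by (rule gd_nonneg)
  have fin: "geodesic_dist M u v \<noteq> \<infinity>" using bound[of 0] by auto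
  obtain g where g: "geodesic_dist M u v = ereal g" using fin nonneg by (cases "geodesic_dist M u v") auto
  have "g \<le> 1 * A" using lim by (rule LIMSEQ_le_const) (use bound g in auto)
  then show ?thesis using g by (simp add: A_def t_def)
qed

end


lemma graph_path_iff: "graph_path V e u v P \<longleftrightarrow> P \<noteq> [] \<and> hd P = u \<and> last P = v \<and> set P \<subseteq> V \<and> gaps e P"
  unfolding graph_path_def gaps_idx by simp

lemma graph_dist_le: "graph_path V e u v P \<Longrightarrow> graph_dist V e u v \<le> ereal (psum P)"
  unfolding graph_dist_def csum_idx by (rule INF_lower2[of P]) auto

lemma graph_dist_ge: "(\<And>P. graph_path V e u v P \<Longrightarrow> B \<le> ereal (psum P)) \<Longrightarrow> B \<le> graph_dist V e u v"
  unfolding graph_dist_def csum_idx by (rule INF_greatest) auto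

lemma gaps_append: "xs \<noteq> [] \<Longrightarrow> ys \<noteq> [] \<Longrightarrow>
  gaps e (xs @ ys) \<longleftrightarrow> gaps e xs \<and> norm (hd ys - last xs) \<le> e \<and> gaps e ys"
proof (induction xs)
  case (Cons x xs)
  show ?case
  proof (cases "xs = []")
    case True
    then show ?thesis using Cons by (cases ys) auto
  next
    case False
    then show ?thesis using Cons by (simp add: gaps_Cons)
  qed
qed simp

lemma greedy:
  fixes V :: "'a::real_normed_vector set"
  assumes par: "0 < \<eta>" "\<eta> < e'" "0 \<le> \<delta>" "e' + 2*\<delta> \<le> e" and yV: "y \<in> V"
  shows "ps \<noteq> [] \<Longrightarrow> last ps = y \<Longrightarrow> gaps \<eta> ps \<Longrightarrow> (\<forall>p\<in>set ps. \<exists>q\<in>V. norm (q - p) \<le> \<delta>)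
    \<Longrightarrow> u \<in> V \<Longrightarrow> norm (u - hd ps) \<le> \<delta>
    \<Longrightarrow> \<exists>P. graph_path V e u y P \<and> psum P \<le> norm (u - hd ps) + psum ps + 2*\<delta>/(e' - \<eta>) * psum ps"
proof (induction "length ps" arbitrary: ps u rule: less_induct)
  case less
  define p where "p = hd ps"
  define K where "K = 2*\<delta>/(e' - \<eta>)"
  have K0: "0 \<le> K" using par by (simp add: K_def)
  have ps0: "0 \<le> psum ps" by (rule csum_nonneg) simp
  show ?case
  proof (cases "norm (y - p) \<le> e'")
    case True
    have "norm (y - u) \<le> norm (y - p) + norm (p - u)" using norm_triangle_ineq[of "y - p" "p - u"] by simp
    also have "\<dots> \<le> e' + \<delta>" using True less.prems(6) by (simp add: p_def norm_minus_commute)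
    finally have yu: "norm (y - u) \<le> e" using par by simp
    have gp: "graph_path V e u y [u, y]" using less.prems(5) yV yu by (simp add: graph_path_iff)
    have "norm (y - u) \<le> norm (u - p) + norm (y - p)"
      using norm_triangle_ineq[of "y - p" "p - u"] by (simp add: norm_minus_commute)
    also have "norm (y - p) \<le> psum ps" using psum_ge_dist[OF less.prems(1)] less.prems(2) by (simp add: p_def)
    finally have "norm (y - u) \<le> norm (u - hd ps) + psum ps" by (simp add: p_def)
    moreover have "0 \<le> K * psum ps" using K0 ps0 by simp
    ultimately have "psum [u, y] \<le> norm (u - hd ps) + psum ps + K * psum ps" by simp
    then show ?thesis using gp by (auto simp: K_def)
  next
    case False
    have yin: "y \<in> set ps" using less.prems(1,2) by auto
    have "\<exists>w\<in>set ps. e' - \<eta> < norm (w - p)" using yin False par by (intro bexI[of _ y]) auto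
    then obtain xs w zs where sp: "ps = xs @ w # zs" "e' - \<eta> < norm (w - p)"
      and pre: "\<forall>x\<in>set xs. \<not> e' - \<eta> < norm (x - p)"
      using split_list_first_prop[of ps "\<lambda>w. e' - \<eta> < norm (w - p)"] by blast
    have xs0: "xs \<noteq> []"
    proof
      assume "xs = []"
      then have "w = p" using sp by (simp add: p_def)
      then show False using sp par by simp
    qed
    have hdxs: "hd xs = p" using xs0 sp by (simp add: p_def)
    have gs: "gaps \<eta> xs" "norm (w - last xs) \<le> \<eta>" "gaps \<eta> (w # zs)"
      using gaps_append[OF xs0, of "w # zs" \<eta>] less.prems(3) sp by auto
    have "last xs \<in> set xs" using xs0 by simp
    then have "norm (last xs - p) \<le> e' - \<eta>" using pre by force
    then have wp: "norm (w - p) \<le> e'" using gs(2) norm_triangle_ineq[of "w - last xs" "last xs - p"] by simp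
    obtain q where q: "q \<in> V" "norm (q - w) \<le> \<delta>" using less.prems(4) sp by auto
    define ps' where "ps' = w # zs"
    have len: "length ps' < length ps" using sp xs0 by (simp add: ps'_def)
    have lst: "last ps' = y" using less.prems(2) sp by (simp add: ps'_def)
    have smp: "\<forall>p\<in>set ps'. \<exists>q\<in>V. norm (q - p) \<le> \<delta>" using less.prems(4) sp by (auto simp: ps'_def)
    obtain P' where P': "graph_path V e q y P'" "psum P' \<le> norm (q - hd ps') + psum ps' + K * psum ps'"
      using less.hyps[OF len, of q] lst gs(3) smp q by (auto simp: ps'_def K_def)
    have qu: "norm (q - u) \<le> e"
    proof -
      have "norm (q - u) \<le> norm (q - w) + norm (w - p) + norm (p - u)"
        using norm_triangle_ineq[of "q - w" "w - u"] norm_triangle_ineq[of "w - p" "p - u"] by simp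
      also have "\<dots> \<le> \<delta> + e' + \<delta>" using q wp less.prems(6) by (simp add: p_def norm_minus_commute)
      finally show ?thesis using par by simp
    qed
    have P'ne: "P' \<noteq> []" "hd P' = q" using P'(1) by (auto simp: graph_path_iff)
    have gp: "graph_path V e u y (u # P')"
      using P'(1) qu less.prems(5) P'ne by (auto simp: graph_path_iff gaps_Cons)
    have cost: "psum (u # P') = norm (q - u) + psum P'" using P'ne by (simp add: csum_Cons)
    have split: "psum ps = psum (xs @ [w]) + psum ps'"
      using sp xs0 by (simp add: ps'_def csum_append csum_snoc)
    have first: "norm (w - p) \<le> psum (xs @ [w])" using psum_ge_dist[of "xs @ [w]"] hdxs xs0 by simp
    have "2*\<delta> = K * (e' - \<eta>)" using par by (simp add: K_def)
    also have "\<dots> \<le> K * psum (xs @ [w])" using sp first K0 by (intro mult_left_mono) auto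
    finally have twod: "2*\<delta> \<le> K * psum (xs @ [w])" .
    have "norm (q - u) \<le> norm (q - w) + norm (w - p) + norm (p - u)"
      using norm_triangle_ineq[of "q - w" "w - u"] norm_triangle_ineq[of "w - p" "p - u"] by simp
    then have "psum (u # P') \<le> norm (q - w) + norm (w - p) + norm (p - u) + norm (q - w) + psum ps' + K * psum ps'"
      using cost P'(2) by (simp add: ps'_def)
    also have "\<dots> \<le> norm (u - p) + psum (xs @ [w]) + 2*\<delta> + psum ps' + K * psum ps'"
      using q first by (simp add: norm_minus_commute)
    also have "\<dots> \<le> norm (u - p) + psum ps + K * psum ps"
      using twod split by (simp add: algebra_simps)
    finally show ?thesis using gp by (auto simp: p_def K_def)
  qed
qed


lemma fine_chain:
  fixes g :: "real \<Rightarrow> 'a::real_normed_vector"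
  assumes c: "curve_in M x y g T" and eta: "0 < \<eta>"
  shows "\<exists>ps. ps \<noteq> [] \<and> hd ps = x \<and> last ps = y \<and> set ps \<subseteq> M \<and> gaps \<eta> ps \<and> ereal (psum ps) \<le> curve_length g T"
proof -
  have T0: "0 \<le> T" and cont: "continuous_on {0..T} g" and img: "g ` {0..T} \<subseteq> M"
    and e0: "g 0 = x" and eT: "g T = y" using c by (auto simp: curve_in_def)
  have "uniformly_continuous_on {0..T} g" by (rule compact_uniformly_continuous[OF cont compact_Icc])
  then obtain d where d: "0 < d" "\<forall>s\<in>{0..T}. \<forall>s'\<in>{0..T}. dist s' s < d \<longrightarrow> dist (g s') (g s) < \<eta>"
    using eta unfolding uniformly_continuous_on_def by blast
  obtain N :: nat where N: "T / d < real N" using reals_Archimedean2 by blast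
  have Npos: "0 < real N" using N T0 d by (smt (verit) divide_nonneg_pos)
  have step: "T / real N < d" using N d Npos by (simp add: field_simps)
  define ts where "ts = map (\<lambda>j. real j * T / real N) [0..<Suc N]"
  have len: "length ts = Suc N" by (simp add: ts_def)
  have nth: "i < Suc N \<Longrightarrow> ts ! i = real i * T / real N" for i by (simp add: ts_def del: upt_Suc)
  have sorted: "sorted ts"
    unfolding sorted_iff_nth_mono
  proof (intro allI impI)
    fix i j assume "i \<le> j" "j < length ts"
    then show "ts ! i \<le> ts ! j" using T0 Npos len by (simp add: nth divide_right_mono mult_right_mono)
  qed
  have inT: "set ts \<subseteq> {0..T}"
  proof
    fix s assume "s \<in> set ts"
    then obtain j where j: "j < Suc N" "s = real j * T / real N" by (auto simp: ts_def simp del: upt_Suc)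
    have "real j * T \<le> real N * T" using j T0 by (intro mult_right_mono) auto
    then have "real j * T / real N \<le> real N * T / real N" using Npos by (intro divide_right_mono) auto
    then have "s \<le> T" using j Npos by simp
    moreover have "0 \<le> s" using j T0 Npos by simp
    ultimately show "s \<in> {0..T}" by simp
  qed
  define ps where "ps = map g ts"
  have "ps \<noteq> []" by (simp add: ps_def ts_def del: upt_Suc)
  moreover have "hd ps = x" using e0 by (simp add: ps_def ts_def hd_map del: upt_Suc)
  moreover have "last ps = y"
  proof -
    have "ts \<noteq> []" using len by auto
    then have "last ts = ts ! (length ts - 1)" by (rule last_conv_nth)
    then have "last ts = ts ! N" using len by simp
    then have "last ts = T" using Npos by (simp add: nth)
    then show ?thesis using eT by (simp add: ps_def last_map ts_def del: upt_Suc)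
  qed
  moreover have "set ps \<subseteq> M" using inT img by (auto simp: ps_def)
  moreover have "gaps \<eta> ps"
    unfolding gaps_idx
  proof (intro allI impI)
    fix i assume i: "i < length ps - 1"
    then have i1: "Suc i < Suc N" "i < Suc N" by (simp_all add: ps_def len)
    have "ts ! Suc i - ts ! i = T / real N" using i1 Npos by (simp add: nth field_simps)
    then have "dist (ts ! Suc i) (ts ! i) < d" using step T0 Npos by (simp add: dist_real_def)
    moreover have "ts ! Suc i \<in> set ts" "ts ! i \<in> set ts" using i1 len by (simp_all add: nth_mem)
    then have "ts ! Suc i \<in> {0..T}" "ts ! i \<in> {0..T}" using inT by blast+
    ultimately have "dist (g (ts ! Suc i)) (g (ts ! i)) < \<eta>" using d(2) by blast
    then show "norm (ps ! Suc i - ps ! i) \<le> \<eta>" using i1 len by (simp add: ps_def dist_norm)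
  qed
  moreover have "ereal (psum ps) \<le> curve_length g T" unfolding ps_def by (rule cl_ge[OF sorted inT])
  ultimately show ?thesis by blast
qed

lemma hd_sample:
  fixes M X :: "'a::euclidean_space set"
  assumes cM: "compact M" and fX: "finite X" and neX: "X \<noteq> {}" and p: "p \<in> M"
  shows "\<exists>q\<in>X. norm (q - p) \<le> hausdorff_dist X M"
proof -
  have "bounded ((\<lambda>c. infdist c X) ` M)"
    by (intro compact_imp_bounded compact_continuous_image continuous_intros cM)
  then have bdd: "bdd_above ((\<lambda>c. infdist c X) ` M)" by (rule bounded_imp_bdd_above)
  have "infdist p X \<le> (SUP c\<in>M. infdist c X)" using bdd p by (intro cSUP_upper)
  also have "\<dots> \<le> hausdorff_dist X M" by (simp add: hausdorff_dist_def)
  finally have le: "infdist p X \<le> hausdorff_dist X M" .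
  obtain q where "q \<in> X" "infdist p X = dist p q"
    using infdist_attains_inf[OF finite_imp_closed[OF fX] neX] by blast
  then show ?thesis using le by (intro bexI[of _ q]) (auto simp: dist_norm norm_minus_commute)
qed

lemma upper_graph:
  fixes M X :: "'a::euclidean_space set"
  assumes cM: "compact M" and gc: "geodesically_convex M" and fX: "finite X" and neX: "X \<noteq> {}"
    and XM: "X \<subseteq> M" and x: "x \<in> M" and y: "y \<in> M" and e: "0 < e"
    and small: "hausdorff_dist X M \<le> e/8"
  shows "graph_dist (X \<union> {x, y}) e x y \<le> ereal (1 + 4 * (hausdorff_dist X M / e)) * geodesic_dist M x y"
proof -
  define \<delta> where "\<delta> = hausdorff_dist X M"
  define V where "V = X \<union> {x, y}"
  have samp: "\<forall>p\<in>M. \<exists>q\<in>V. norm (q - p) \<le> \<delta>"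
    using hd_sample[OF cM fX neX] by (fastforce simp: V_def \<delta>_def)
  have d0: "0 \<le> \<delta>"
  proof -
    obtain q where "q \<in> V" "norm (q - x) \<le> \<delta>" using samp x by blast
    then show ?thesis using norm_ge_zero[of "q - x"] by linarith
  qed
  have fpos: "0 < 1 + 4 * (\<delta> / e)" using d0 e by (simp add: add_pos_nonneg)
  obtain g T where c: "curve_in M x y g T" "curve_length g T = geodesic_dist M x y"
    using gc x y unfolding geodesically_convex_def by blast
  show ?thesis
  proof (cases "geodesic_dist M x y = \<infinity>")
    case True
    then show ?thesis using fpos by (simp add: \<delta>_def)
  next
    case False
    define \<eta> where "\<eta> = e/4"
    define e' where "e' = e - 2*\<delta>"
    have par: "0 < \<eta>" "\<eta> < e'" "0 \<le> \<delta>" "e' + 2*\<delta> \<le> e" using e d0 small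
      by (auto simp: \<eta>_def e'_def \<delta>_def)
    obtain ps where ps: "ps \<noteq> []" "hd ps = x" "last ps = y" "set ps \<subseteq> M" "gaps \<eta> ps"
      "ereal (psum ps) \<le> curve_length g T"
      using fine_chain[OF c(1) par(1)] by blast
    have yV: "y \<in> V" and xV: "x \<in> V" by (simp_all add: V_def)
    have smp: "\<forall>p\<in>set ps. \<exists>q\<in>V. norm (q - p) \<le> \<delta>" using samp ps(4) by blast
    obtain P where P: "graph_path V e x y P" "psum P \<le> norm (x - hd ps) + psum ps + 2*\<delta>/(e' - \<eta>) * psum ps"
      using greedy[OF par yV ps(1,3,5) smp xV] ps(2) d0 by auto
    have ps0: "0 \<le> psum ps" by (rule csum_nonneg) simp
    have "2*\<delta>/(e' - \<eta>) \<le> 2*\<delta>/(e/2)"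
      using par d0 small e by (intro divide_left_mono) (auto simp: e'_def \<eta>_def \<delta>_def)
    also have "\<dots> = 4 * (\<delta> / e)" by simp
    finally have Kle: "2*\<delta>/(e' - \<eta>) \<le> 4 * (\<delta> / e)" .
    have "psum P \<le> (1 + 4 * (\<delta> / e)) * psum ps"
      using P(2) ps(2) mult_right_mono[OF Kle ps0] by (simp add: algebra_simps)
    then have "graph_dist V e x y \<le> ereal ((1 + 4 * (\<delta> / e)) * psum ps)"
      using graph_dist_le[OF P(1)] by (meson ereal_less_eq(3) order_trans)
    also have "\<dots> = ereal (1 + 4 * (\<delta> / e)) * ereal (psum ps)" by simp
    also have "\<dots> \<le> ereal (1 + 4 * (\<delta> / e)) * geodesic_dist M x y"
      using ps(6) c(2) fpos by (intro ereal_mult_left_mono) auto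
    finally show ?thesis by (simp add: V_def \<delta>_def)
  qed
qed


lemma posreach_of_reach:
  fixes M :: "'a::euclidean_space set"
  assumes cM: "compact M" and neM: "M \<noteq> {}" and r: "0 < r" and rr: "ereal r \<le> reach M"
  shows "posreach M r"
proof (unfold_locales)
  show "compact M" by (rule cM)
  show "M \<noteq> {}" by (rule neM)
  show "0 < r" by (rule r)
  fix z p q assume z: "infdist z M < r" and p: "p \<in> M" and q: "q \<in> M"
    and dp: "dist z p = infdist z M" and dq: "dist z q = infdist z M"
  have "reach M \<le> reach_at M p" unfolding reach_def using p by (rule INF_lower)
  moreover have "ereal (dist z p) < ereal r" using z dp by simp
  ultimately have lt: "ereal (dist z p) < reach_at M p" using rr by (meson less_le_trans)
  have "\<exists>\<rho>\<in>{r. r > 0 \<and> ball p r \<subseteq> Unp M}. ereal (dist z p) < ereal \<rho>"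
    using lt unfolding reach_at_def by (simp add: less_SUP_iff)
  then obtain \<rho> where \<rho>: "\<rho> > 0" "ball p \<rho> \<subseteq> Unp M" "dist z p < \<rho>" by auto
  then have "z \<in> Unp M" by (auto simp: dist_commute)
  then have u: "\<exists>!a. a \<in> M \<and> (\<forall>b\<in>M. dist z a \<le> dist z b)" by (simp add: Unp_def)
  have "\<forall>b\<in>M. dist z p \<le> dist z b" using dp infdist_le by metis
  moreover have "\<forall>b\<in>M. dist z q \<le> dist z b" using dq infdist_le by metis
  ultimately show "p = q" using u p q by blast
qed

context posreach
begin

lemma factor_pos:
  assumes "0 < e" "e < 2*r" shows "0 < 1 - (1/24) * (pi * e / 2)^2 * (1/r)^2"
proof -
  have "(pi * e / 2)^2 * (1/r)^2 = (pi * (e / (2*r)))^2" by (simp add: power_mult_distrib power_divide)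
  also have "\<dots> < 4^2"
  proof (rule power_strict_mono)
    have "e / (2*r) < 1" using assms rpos by simp
    then have "pi * (e / (2*r)) < pi * 1" using pi_gt_zero by (intro mult_strict_left_mono) auto
    then show "pi * (e / (2*r)) < 4" using pi_less_4 by simp
    show "0 \<le> pi * (e / (2*r))" using assms rpos by simp
  qed simp
  finally show ?thesis by simp
qed

lemma lower_graph:
  assumes gc: "geodesically_convex M" and e: "0 < e" "e < 2*r" and V: "V \<subseteq> M" and x: "x \<in> V" and y: "y \<in> V"
  shows "ereal (1 - (1/24) * (pi * e / 2)^2 * (1/r)^2) * geodesic_dist M x y \<le> graph_dist V e x y"
proof (rule graph_dist_ge)
  fix P assume P: "graph_path V e x y P"
  define c where "c = 1 - (1/24) * (pi * e / 2)^2 * (1/r)^2"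
  have cpos: "0 < c" unfolding c_def by (rule factor_pos[OF e])
  have Pp: "P \<noteq> []" "hd P = x" "last P = y" "set P \<subseteq> V" "gaps e P" using P by (auto simp: graph_path_iff)
  have loc: "geodesic_dist M a b \<le> ereal ((1/c) * norm (b - a))"
    if ab: "a \<in> M" "b \<in> M" "norm (b - a) \<le> e" for a b
  proof -
    have "geodesic_dist M a b \<le> ereal (2*r*arcsin (norm (b - a)/(2*r)))"
      using gd_arc[OF gc ab(1,2)] ab(3) e by simp
    also have "c * (2*r*arcsin (norm (b - a)/(2*r))) \<le> norm (b - a)"
      unfolding c_def using lower_factor[OF rpos _ ab(3) e(2)] by simp
    then have "2*r*arcsin (norm (b - a)/(2*r)) \<le> (1/c) * norm (b - a)" using cpos by (simp add: field_simps)
    finally show ?thesis by simp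
  qed
  have "geodesic_dist M (hd P) (last P) \<le> ereal (csum (\<lambda>s. (1/c) * s) P)"
    by (rule gd_chain[OF gc loc Pp(1)]) (use Pp V in auto)
  also have "csum (\<lambda>s. (1/c) * s) P = psum P / c" using csum_cmult[of "1/c" "\<lambda>s. s" P] by simp
  finally have "geodesic_dist M x y \<le> ereal (psum P / c)" using Pp by simp
  then have "ereal c * geodesic_dist M x y \<le> ereal c * ereal (psum P / c)"
    using cpos by (intro ereal_mult_left_mono) auto
  also have "\<dots> = ereal (psum P)" using cpos by simp
  finally show "ereal (1 - (1/24) * (pi * e / 2)^2 * (1/r)^2) * geodesic_dist M x y \<le> ereal (psum P)"
    by (simp add: c_def)
qed

end

lemma lower_inf:
  fixes M :: "'a::euclidean_space set"
  assumes pr: "\<And>r. 0 < r \<Longrightarrow> posreach M r" and gc: "geodesically_convex M" and e: "0 < e"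
    and V: "V \<subseteq> M" and x: "x \<in> V" and y: "y \<in> V"
  shows "geodesic_dist M x y \<le> graph_dist V e x y"
proof (rule graph_dist_ge)
  fix P assume P: "graph_path V e x y P"
  define rr where "rr k = (e + 1) + real k" for k :: nat
  define c where "c k = 1 - (1/24) * (pi * e / 2)^2 * (1/rr k)^2" for k
  have rrpos: "0 < rr k" "e < 2 * rr k" for k using e by (auto simp: rr_def)
  have b: "ereal (c k) * geodesic_dist M x y \<le> ereal (psum P)" for k
  proof -
    interpret posreach M "rr k" by (rule pr[OF rrpos(1)])
    have "ereal (c k) * geodesic_dist M x y \<le> graph_dist V e x y"
      unfolding c_def by (rule lower_graph[OF gc e rrpos(2) V x y])
    also have "\<dots> \<le> ereal (psum P)" by (rule graph_dist_le[OF P])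
    finally show ?thesis .
  qed
  have cpos: "0 < c k" for k
  proof -
    interpret posreach M "rr k" by (rule pr[OF rrpos(1)])
    show ?thesis unfolding c_def by (rule factor_pos[OF e rrpos(2)])
  qed
  have nonneg: "0 \<le> geodesic_dist M x y" by (rule gd_nonneg)
  have fin: "geodesic_dist M x y \<noteq> \<infinity>" using b[of 0] cpos[of 0] by auto
  obtain g where g: "geodesic_dist M x y = ereal g" using fin nonneg by (cases "geodesic_dist M x y") auto
  have bk: "c k * g \<le> psum P" for k using b[of k] g by simp
  have "filterlim rr at_top sequentially" unfolding rr_def
    by (intro filterlim_tendsto_add_at_top[OF tendsto_const] filterlim_real_sequentially)
  then have "(\<lambda>k. (1 - (1/24) * (pi * e / 2)^2 * (inverse (rr k))^2) * g) \<longlonglongrightarrow> (1 - (1/24) * (pi * e / 2)^2 * 0^2) * g"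
    by (intro tendsto_intros tendsto_inverse_0_at_top)
  then have lim: "(\<lambda>k. c k * g) \<longlonglongrightarrow> g" by (simp add: c_def inverse_eq_divide)
  have "g \<le> psum P" using lim by (rule LIMSEQ_le_const2) (use bk in auto)
  then show "geodesic_dist M x y \<le> ereal (psum P)" using g by simp
qed


theorem theorem1:
  fixes M :: "'a::euclidean_space set"
    and X :: "nat \<Rightarrow> 'a set"
    and eps :: "nat \<Rightarrow> real"
  assumes "compact M"
    and "geodesically_convex M"
    and "reach M > 0"
    and "\<And>n. n \<ge> 1 \<Longrightarrow> finite (X n) \<and> X n \<noteq> {} \<and> X n \<subseteq> M"
    and "\<And>n. eps n > 0"
    and "eps \<longlonglongrightarrow> 0"
    and "(\<lambda>n. hausdorff_dist (X n) M / eps n) \<longlonglongrightarrow> 0"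
  shows "\<forall>\<^sub>F n in sequentially. ereal (eps n) < 2 * reach M \<and>
           (\<forall>x\<in>M. \<forall>y\<in>M.
              ereal (1 - (1/24) * (pi * eps n / 2)^2 * (real_of_ereal (inverse (reach M)))^2)
                 * geodesic_dist M x y
                \<le> graph_dist (X n \<union> {x, y}) (eps n) x y
            \<and> graph_dist (X n \<union> {x, y}) (eps n) x y
                \<le> ereal (1 + 4 * (hausdorff_dist (X n) M / eps n)) * geodesic_dist M x y)"
proof -
  note cM = assms(1) and gc = assms(2) and rpos = assms(3) and XA = assms(4) and epos = assms(5)
  have neM: "M \<noteq> {}" using XA[of 1] by auto
  have evh: "\<forall>\<^sub>F n in sequentially. hausdorff_dist (X n) M / eps n < 1/8"
    using order_tendstoD(2)[OF assms(7), of "1/8"] by simp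
  have ev1: "\<forall>\<^sub>F n in sequentially. 1 \<le> n" by (rule eventually_ge_at_top)
  have up: "graph_dist (X n \<union> {x, y}) (eps n) x y
                \<le> ereal (1 + 4 * (hausdorff_dist (X n) M / eps n)) * geodesic_dist M x y"
    if n: "1 \<le> n" "hausdorff_dist (X n) M / eps n < 1/8" and x: "x \<in> M" and y: "y \<in> M" for n x y
  proof (rule upper_graph[OF cM gc _ _ _ x y epos])
    show "finite (X n)" "X n \<noteq> {}" "X n \<subseteq> M" using XA n(1) by auto
    show "hausdorff_dist (X n) M \<le> eps n / 8" using n(2) epos[of n] by (simp add: field_simps)
  qed
  have VM: "X n \<union> {x, y} \<subseteq> M" if "1 \<le> n" "x \<in> M" "y \<in> M" for n x y using XA that by auto
  show ?thesis
  proof (cases "reach M")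
    case (real r0)
    have r0: "0 < r0" using rpos real by simp
    interpret posreach M r0 by (rule posreach_of_reach[OF cM neM r0]) (simp add: real)
    have inv: "real_of_ereal (inverse (reach M)) = 1/r0" using real r0 by (simp add: inverse_eq_divide)
    have eve: "\<forall>\<^sub>F n in sequentially. eps n < 2*r0" using order_tendstoD(2)[OF assms(6), of "2*r0"] r0 by simp
    show ?thesis
    proof (rule eventually_mono[OF eventually_conj[OF eve eventually_conj[OF evh ev1]]])
      fix n assume n: "eps n < 2*r0 \<and> hausdorff_dist (X n) M / eps n < 1/8 \<and> 1 \<le> n"
      have "ereal (eps n) < 2 * reach M" using n real by simp
      moreover have "\<forall>x\<in>M. \<forall>y\<in>M.
              ereal (1 - (1/24) * (pi * eps n / 2)^2 * (real_of_ereal (inverse (reach M)))^2)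
                 * geodesic_dist M x y
                \<le> graph_dist (X n \<union> {x, y}) (eps n) x y
            \<and> graph_dist (X n \<union> {x, y}) (eps n) x y
                \<le> ereal (1 + 4 * (hausdorff_dist (X n) M / eps n)) * geodesic_dist M x y"
      proof (intro ballI conjI)
        fix x y assume x: "x \<in> M" and y: "y \<in> M"
        show "ereal (1 - (1/24) * (pi * eps n / 2)^2 * (real_of_ereal (inverse (reach M)))^2)
                 * geodesic_dist M x y \<le> graph_dist (X n \<union> {x, y}) (eps n) x y"
          unfolding inv using n by (intro lower_graph[OF gc epos _ VM]) (auto simp: x y)
        show "graph_dist (X n \<union> {x, y}) (eps n) x y
                \<le> ereal (1 + 4 * (hausdorff_dist (X n) M / eps n)) * geodesic_dist M x y"
          using up n x y by auto
      qed
      ultimately show "ereal (eps n) < 2 * reach M \<and> (\<forall>x\<in>M. \<forall>y\<in>M.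
              ereal (1 - (1/24) * (pi * eps n / 2)^2 * (real_of_ereal (inverse (reach M)))^2)
                 * geodesic_dist M x y
                \<le> graph_dist (X n \<union> {x, y}) (eps n) x y
            \<and> graph_dist (X n \<union> {x, y}) (eps n) x y
                \<le> ereal (1 + 4 * (hausdorff_dist (X n) M / eps n)) * geodesic_dist M x y)" by blast
    qed
  next
    case PInf
    have pr: "posreach M r" if "0 < r" for r
      by (rule posreach_of_reach[OF cM neM that]) (simp add: PInf)
    have inv: "real_of_ereal (inverse (reach M)) = 0" using PInf by simp
    show ?thesis
    proof (rule eventually_mono[OF eventually_conj[OF evh ev1]])
      fix n assume n: "hausdorff_dist (X n) M / eps n < 1/8 \<and> 1 \<le> n"
      have "ereal (eps n) < 2 * reach M" using PInf by simp
      moreover have "\<forall>x\<in>M. \<forall>y\<in>M.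
              ereal (1 - (1/24) * (pi * eps n / 2)^2 * (real_of_ereal (inverse (reach M)))^2)
                 * geodesic_dist M x y
                \<le> graph_dist (X n \<union> {x, y}) (eps n) x y
            \<and> graph_dist (X n \<union> {x, y}) (eps n) x y
                \<le> ereal (1 + 4 * (hausdorff_dist (X n) M / eps n)) * geodesic_dist M x y"
      proof (intro ballI conjI)
        fix x y assume x: "x \<in> M" and y: "y \<in> M"
        show "ereal (1 - (1/24) * (pi * eps n / 2)^2 * (real_of_ereal (inverse (reach M)))^2)
                 * geodesic_dist M x y \<le> graph_dist (X n \<union> {x, y}) (eps n) x y"
        proof -
          have "geodesic_dist M x y \<le> graph_dist (X n \<union> {x,y}) (eps n) x y"
            by (rule lower_inf[OF pr gc epos VM]) (use n x y in auto)
          then show ?thesis unfolding inv by (simp add: one_ereal_def[symmetric])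
        qed
        show "graph_dist (X n \<union> {x, y}) (eps n) x y
                \<le> ereal (1 + 4 * (hausdorff_dist (X n) M / eps n)) * geodesic_dist M x y"
          using up n x y by auto
      qed
      ultimately show "ereal (eps n) < 2 * reach M \<and> (\<forall>x\<in>M. \<forall>y\<in>M.
              ereal (1 - (1/24) * (pi * eps n / 2)^2 * (real_of_ereal (inverse (reach M)))^2)
                 * geodesic_dist M x y
                \<le> graph_dist (X n \<union> {x, y}) (eps n) x y
            \<and> graph_dist (X n \<union> {x, y}) (eps n) x y
                \<le> ereal (1 + 4 * (hausdorff_dist (X n) M / eps n)) * geodesic_dist M x y)" by blast
    qed
  next
    case MInf
    then show ?thesis using rpos by simp
  qed
qed


end
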